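(* Let $M_s=\mathbf{Sp}(2,\mathbb{R})/\mathbf{SL}(2,\mathbb{R})_s$ with the $\mathbf{Sp}(2,\mathbb{R})$-invariant metric $g_K=2(f^4)^2-2f^3\odot f^5+f^2\odot f^6-4f^1\odot f^7$ (notation as in the context). The most general $\mathbf{Sp}(2,\mathbb{R})$-invariant 3-form $\phi$ on $M_s$ (i.e. of the form $\tfrac16\phi_{\mu\nu\rho}f^\mu\wedge f^\nu\wedge f^\rho$ with constant coefficients, $\mu,\nu,\rho\in\{1,\dots,7\}$, satisfying $\mathcal{L}_X\phi=0$ for all $X$ in $D_s$) such that $(g_K,\phi)$ is compatible is the 1-parameter family $$\phi=2f^{147}+\tfrac12f^{246}+f^{345}+qf^{136}+\frac{1}{q}f^{257},\qquad q\neq0.$$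
   Context: Realize $\mathfrak{sp}(2,\mathbb{R})$ as the real $4\times 4$ matrices $$E=\begin{pmatrix} a_5&a_7&a_9&2a_{10}\\ -a_4&a_6&a_8&a_9\\ a_2&a_3&-a_6&-a_7\\ -2a_1&a_2&a_4&-a_5\end{pmatrix}$$ with basis $E_I=\partial E/\partial a_I$. Put $f_1=E_1,\ f_2=E_3,\ f_3=E_4,\ f_4=E_6-E_5,\ f_5=E_7,\ f_6=E_8,\ f_7=E_{10},\ f_8=E_2,\ f_9=E_5+E_6,\ f_{10}=E_9$, regarded as left-invariant vector fields on $\mathbf{Sp}(2,\mathbb{R})$, with dual left-invariant 1-forms $(f^I)$. $\mathbf{SL}(2,\mathbb{R})_s$ is the subgroup with Lie algebra $\mathrm{Span}(E_2,E_5+E_6,E_9)=\mathrm{Span}(f_8,f_9,f_{10})$; $D_s$ is the distribution spanned by $f_8,f_9,f_{10}$, with leaf space $M_s$; forms in $f^1,\dots,f^7$ with constant coefficients annihilated by $\mathcal{L}_X$, $X\in D_s$, descend to $M_s$. A pair $(g,\phi)$ is compatible if $(f_\mu\lrcorner\phi)\wedge(f_\nu\lrcorner\phi)\wedge\phi=3g(f_\mu,f_\nu)\,f^1\wedge\cdots\wedge f^7$ for all $\mu,\nu=1,\dots,7$. Notation: $f^I\odot f^J=\tfrac12(f^I\otimes f^J+f^J\otimes f^I)$, $(f^I)^2=f^I\odot f^I$, $f^{\mu\nu\rho}=f^\mu\wedge f^\nu\wedge f^\rho$. *)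

theory Defs
  imports Complex_Main "HOL-Combinatorics.Permutations"
begin

text \<open>Real 4x4 matrices are modelled as functions nat => nat => real, only entries with
indices 0..3 being relevant.\<close>

type_synonym mat4 = "nat \<Rightarrow> nat \<Rightarrow> real"

definition Emat :: "(nat \<Rightarrow> real) \<Rightarrow> mat4" where
  "Emat a = (\<lambda>i j.
     [[a 5, a 7, a 9, 2 * a 10],
      [- a 4, a 6, a 8, a 9],
      [a 2, a 3, - a 6, - a 7],
      [-2 * a 1, a 2, a 4, - a 5]] ! i ! j)"

definition Ebas :: "nat \<Rightarrow> mat4" where
  "Ebas I = Emat (\<lambda>J. if J = I then 1 else 0)"

definition madd :: "mat4 \<Rightarrow> mat4 \<Rightarrow> mat4" where
  "madd A B = (\<lambda>i j. A i j + B i j)"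

definition msub :: "mat4 \<Rightarrow> mat4 \<Rightarrow> mat4" where
  "msub A B = (\<lambda>i j. A i j - B i j)"

definition mmul :: "mat4 \<Rightarrow> mat4 \<Rightarrow> mat4" where
  "mmul A B = (\<lambda>i j. \<Sum>k<4. A i k * B k j)"

definition mbr :: "mat4 \<Rightarrow> mat4 \<Rightarrow> mat4" where
  "mbr A B = msub (mmul A B) (mmul B A)"

definition fbas :: "nat \<Rightarrow> mat4" where
  "fbas I = (if I = 1 then Ebas 1 else if I = 2 then Ebas 3 else if I = 3 then Ebas 4
     else if I = 4 then msub (Ebas 6) (Ebas 5) else if I = 5 then Ebas 7
     else if I = 6 then Ebas 8 else if I = 7 then Ebas 10 else if I = 8 then Ebas 2
     else if I = 9 then madd (Ebas 5) (Ebas 6) else Ebas 9)"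

text \<open>Dual basis f^I: coordinates of a matrix of sp(2,R) w.r.t. f_1..f_10.\<close>
definition fcoord :: "mat4 \<Rightarrow> nat \<Rightarrow> real" where
  "fcoord Y = (THE c. (\<forall>J. J \<notin> {1..10} \<longrightarrow> c J = 0) \<and>
      (\<forall>i<4. \<forall>j<4. Y i j = (\<Sum>J=1..10. c J * fbas J i j)))"

text \<open>A 3-form with constant coefficients phi_{mu nu rho} (mu,nu,rho in 1..7),
  phi = 1/6 phi_{mu nu rho} f^{mu nu rho}, represented by its totally antisymmetric
  coefficient array.\<close>
definition is_coeff3 :: "(nat \<Rightarrow> nat \<Rightarrow> nat \<Rightarrow> real) \<Rightarrow> bool" where
  "is_coeff3 \<phi> \<longleftrightarrow>
     (\<forall>a b c. \<phi> a b c = - \<phi> b a c \<and> \<phi> a b c = - \<phi> a c b) \<and>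
     (\<forall>a b c. \<not> (a \<in> {1..7} \<and> b \<in> {1..7} \<and> c \<in> {1..7}) \<longrightarrow> \<phi> a b c = 0)"

text \<open>Evaluation of the 3-form on three left-invariant vector fields (Lie algebra elements).\<close>
definition eval3 :: "(nat \<Rightarrow> nat \<Rightarrow> nat \<Rightarrow> real) \<Rightarrow> mat4 \<Rightarrow> mat4 \<Rightarrow> mat4 \<Rightarrow> real" where
  "eval3 \<phi> Y1 Y2 Y3 = (\<Sum>a=1..7. \<Sum>b=1..7. \<Sum>c=1..7.
      \<phi> a b c * fcoord Y1 a * fcoord Y2 b * fcoord Y3 c)"

definition lie_deriv3 :: "mat4 \<Rightarrow> (nat \<Rightarrow> nat \<Rightarrow> nat \<Rightarrow> real) \<Rightarrow> mat4 \<Rightarrow> mat4 \<Rightarrow> mat4 \<Rightarrow> real" where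
  "lie_deriv3 X \<phi> Y1 Y2 Y3 =
     - eval3 \<phi> (mbr X Y1) Y2 Y3 - eval3 \<phi> Y1 (mbr X Y2) Y3 - eval3 \<phi> Y1 Y2 (mbr X Y3)"

definition Ds_invariant :: "(nat \<Rightarrow> nat \<Rightarrow> nat \<Rightarrow> real) \<Rightarrow> bool" where
  "Ds_invariant \<phi> \<longleftrightarrow> (\<forall>X \<in> {fbas 8, fbas 9, fbas 10}.
      \<forall>i\<in>{1..10}. \<forall>j\<in>{1..10}. \<forall>k\<in>{1..10}. lie_deriv3 X \<phi> (fbas i) (fbas j) (fbas k) = 0)"

text \<open>Value on (f_1,...,f_7) of the 7-form beta /\ gamma /\ phi, with beta, gamma 2-forms and
  phi a 3-form given by antisymmetric coefficient arrays (determinant convention, so that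
  f^1/\.../\f^7 (f_1,...,f_7) = 1).\<close>
definition wedge223_top :: "(nat \<Rightarrow> nat \<Rightarrow> real) \<Rightarrow> (nat \<Rightarrow> nat \<Rightarrow> real) \<Rightarrow>
    (nat \<Rightarrow> nat \<Rightarrow> nat \<Rightarrow> real) \<Rightarrow> real" where
  "wedge223_top \<beta> \<gamma> \<phi> = (1 / (2 * 2 * 6)) * (\<Sum>p\<in>{p. p permutes {1..7::nat}}.
      of_int (sign p) * \<beta> (p 1) (p 2) * \<gamma> (p 3) (p 4) * \<phi> (p 5) (p 6) (p 7))"

text \<open>Interior product f_mu _| phi has coefficients phi_{mu a b}.\<close>
definition compatible :: "(nat \<Rightarrow> nat \<Rightarrow> real) \<Rightarrow> (nat \<Rightarrow> nat \<Rightarrow> nat \<Rightarrow> real) \<Rightarrow> bool" where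
  "compatible g \<phi> \<longleftrightarrow> (\<forall>\<mu>\<in>{1..7}. \<forall>\<nu>\<in>{1..7}.
      wedge223_top (\<phi> \<mu>) (\<phi> \<nu>) \<phi> = 3 * g \<mu> \<nu>)"

text \<open>Symmetric product f^I . f^J as a bilinear form, evaluated on (f_mu, f_nu).\<close>
definition odot :: "nat \<Rightarrow> nat \<Rightarrow> nat \<Rightarrow> nat \<Rightarrow> real" where
  "odot I J \<mu> \<nu> = ((if I = \<mu> \<and> J = \<nu> then 1 else 0) + (if J = \<mu> \<and> I = \<nu> then 1 else 0)) / 2"

definition gK :: "nat \<Rightarrow> nat \<Rightarrow> real" where
  "gK \<mu> \<nu> = 2 * odot 4 4 \<mu> \<nu> - 2 * odot 3 5 \<mu> \<nu> + odot 2 6 \<mu> \<nu> - 4 * odot 1 7 \<mu> \<nu>"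

definition basic3 :: "nat \<Rightarrow> nat \<Rightarrow> nat \<Rightarrow> nat \<Rightarrow> nat \<Rightarrow> nat \<Rightarrow> real" where
  "basic3 i j k = (\<lambda>a b c.
     (if (a, b, c) = (i, j, k) then 1 else 0) + (if (a, b, c) = (j, k, i) then 1 else 0)
   + (if (a, b, c) = (k, i, j) then 1 else 0) - (if (a, b, c) = (j, i, k) then 1 else 0)
   - (if (a, b, c) = (i, k, j) then 1 else 0) - (if (a, b, c) = (k, j, i) then 1 else 0))"

definition phi_family :: "real \<Rightarrow> nat \<Rightarrow> nat \<Rightarrow> nat \<Rightarrow> real" where
  "phi_family q = (\<lambda>a b c. 2 * basic3 1 4 7 a b c + 1/2 * basic3 2 4 6 a b c
      + basic3 3 4 5 a b c + q * basic3 1 3 6 a b c + (1 / q) * basic3 2 5 7 a b c)"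

end

theory Submission
  imports Defs
begin

lemma all4: "(\<forall>i::nat<4. P i) = (P 0 \<and> P 1 \<and> P 2 \<and> P 3)"
  by (auto simp: numeral_eq_Suc less_Suc_eq)

lemma lt4: "{..<4::nat} = {0,1,2,3}" by (auto simp: numeral_eq_Suc less_Suc_eq)
lemma set10: "{1..10::nat} = {1,2,3,4,5,6,7,8,9,10}" by (auto simp: numeral_eq_Suc le_Suc_eq)
lemma set7: "{1..7::nat} = {1,2,3,4,5,6,7}" by (auto simp: numeral_eq_Suc le_Suc_eq)

definition ea :: "nat \<Rightarrow> nat \<Rightarrow> real" where
  "ea I J = (if I = 4 then (if J = 6 then 1 else if J = 5 then -1 else 0)
     else if I = 9 then (if J = 5 \<or> J = 6 then 1 else 0)
     else if J = (if I = 1 then 1 else if I = 2 then 3 else if I = 3 then 4 else if I = 5 then 7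
        else if I = 6 then 8 else if I = 7 then 10 else if I = 8 then 2 else 9) then 1 else 0)"

definition cfa :: "(nat \<Rightarrow> real) \<Rightarrow> nat \<Rightarrow> real" where
  "cfa a J = (if J = 1 then a 1 else if J = 2 then a 3 else if J = 3 then a 4
     else if J = 4 then (a 6 - a 5) / 2 else if J = 5 then a 7 else if J = 6 then a 8
     else if J = 7 then a 10 else if J = 8 then a 2 else if J = 9 then (a 5 + a 6) / 2
     else if J = 10 then a 9 else 0)"

definition brk :: "(nat \<Rightarrow> real) \<Rightarrow> (nat \<Rightarrow> real) \<Rightarrow> nat \<Rightarrow> real" where
  "brk a b I = (if I = 1 then 2 * a 1 * b 5 + a 2 * b 4 - a 4 * b 2 - 2 * a 5 * b 1
   else if I = 2 then -2 * a 1 * b 7 + a 2 * b 5 + a 2 * b 6 - a 3 * b 4 + a 4 * b 3 - a 5 * b 2 - a 6 * b 2 + 2 * a 7 * b 1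
   else if I = 3 then 2 * a 2 * b 7 + 2 * a 3 * b 6 - 2 * a 6 * b 3 - 2 * a 7 * b 2
   else if I = 4 then -2 * a 1 * b 9 + a 2 * b 8 + a 4 * b 5 - a 4 * b 6 - a 5 * b 4 + a 6 * b 4 - a 8 * b 2 + 2 * a 9 * b 1
   else if I = 5 then 4 * a 1 * b 10 - a 2 * b 9 + a 4 * b 7 - a 7 * b 4 + a 9 * b 2 - 4 * a 10 * b 1
   else if I = 6 then - a 2 * b 9 - a 3 * b 8 - a 4 * b 7 + a 7 * b 4 + a 8 * b 3 + a 9 * b 2
   else if I = 7 then -2 * a 2 * b 10 - a 3 * b 9 + a 5 * b 7 - a 6 * b 7 - a 7 * b 5 + a 7 * b 6 + a 9 * b 3 + 2 * a 10 * b 2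
   else if I = 8 then -2 * a 4 * b 9 + 2 * a 6 * b 8 - 2 * a 8 * b 6 + 2 * a 9 * b 4
   else if I = 9 then -2 * a 4 * b 10 + a 5 * b 9 + a 6 * b 9 + a 7 * b 8 - a 8 * b 7 - a 9 * b 5 - a 9 * b 6 + 2 * a 10 * b 4
   else if I = 10 then 2 * a 5 * b 10 + a 7 * b 9 - a 9 * b 7 - 2 * a 10 * b 5 else 0)"

lemma fbas_agree:
  assumes "I \<in> {1..10}" shows "\<forall>i<4. \<forall>j<4. fbas I i j = Emat (ea I) i j"
proof -
  have "I = 1 \<or> I = 2 \<or> I = 3 \<or> I = 4 \<or> I = 5 \<or> I = 6 \<or> I = 7 \<or> I = 8 \<or> I = 9 \<or> I = 10"
    using assms unfolding set10 by simp
  then show ?thesis unfolding all4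
    by (elim disjE) (simp_all add: fbas_def Ebas_def Emat_def ea_def madd_def msub_def)
qed

lemma mbr_agree:
  assumes "\<forall>i<4. \<forall>j<4. X i j = Emat a i j" "\<forall>i<4. \<forall>j<4. Y i j = Emat b i j"
  shows "\<forall>i<4. \<forall>j<4. mbr X Y i j = Emat (brk a b) i j"
  using assms unfolding all4 set10
  by (simp add: mbr_def msub_def mmul_def Emat_def brk_def lt4 algebra_simps)

lemma fcoord_agree:
  assumes "\<forall>i<4. \<forall>j<4. Y i j = Emat a i j"
  shows "fcoord Y = cfa a"
  unfolding fcoord_def
proof (rule the_equality)
  show "(\<forall>J. J \<notin> {1..10} \<longrightarrow> cfa a J = 0) \<and>
    (\<forall>i<4. \<forall>j<4. Y i j = (\<Sum>J = 1..10. cfa a J * fbas J i j))"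
    using assms unfolding all4 set10
    by (simp add: cfa_def fbas_def Ebas_def Emat_def madd_def msub_def field_simps)
next
  fix c assume c: "(\<forall>J. J \<notin> {1..10} \<longrightarrow> c J = 0) \<and>
    (\<forall>i<4. \<forall>j<4. Y i j = (\<Sum>J = 1..10. c J * fbas J i j))"
  then have e: "\<forall>i<4. \<forall>j<4. Emat a i j = (\<Sum>J = 1..10. c J * fbas J i j)" using assms by simp
  show "c = cfa a"
  proof
    fix J
    show "c J = cfa a J"
    proof (cases "J \<in> {1..10}")
      case False then show ?thesis using c unfolding set10 by (simp add: cfa_def)
    next
      case True
      then have "J = 1 \<or> J = 2 \<or> J = 3 \<or> J = 4 \<or> J = 5 \<or> J = 6 \<or> J = 7 \<or> J = 8 \<or> J = 9 \<or> J = 10"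
        unfolding set10 by simp
      moreover have "a 5 = c 9 - c 4 \<and> a 6 = c 9 + c 4 \<and> a 1 = c 1 \<and> a 2 = c 8 \<and> a 3 = c 2 \<and> a 4 = c 3 \<and>
         a 7 = c 5 \<and> a 8 = c 6 \<and> a 9 = c 10 \<and> a 10 = c 7"
        using e unfolding all4 set10
        by (simp add: fbas_def Ebas_def Emat_def madd_def msub_def set10)
      ultimately show ?thesis by (elim disjE) (simp_all add: cfa_def)
    qed
  qed
qed

definition vv :: "nat \<Rightarrow> nat \<Rightarrow> nat \<Rightarrow> real" where
  "vv x i = cfa (brk (ea x) (ea i))"

definition sv :: "nat \<Rightarrow> nat \<Rightarrow> (nat \<Rightarrow> real) \<Rightarrow> real" where
  "sv x i g = (\<Sum>a\<in>{1,2,3,4,5,6,7}. g a * vv x i a)"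

lemma fcoord_fbas: assumes "I \<in> {1..10}" shows "fcoord (fbas I) = (\<lambda>J. if J = I then 1 else 0)"
proof -
  have "I = 1 \<or> I = 2 \<or> I = 3 \<or> I = 4 \<or> I = 5 \<or> I = 6 \<or> I = 7 \<or> I = 8 \<or> I = 9 \<or> I = 10"
    using assms unfolding set10 by simp
  then have "cfa (ea I) = (\<lambda>J. if J = I then 1 else 0)"
    by (elim disjE) (auto simp: cfa_def ea_def fun_eq_iff)
  then show ?thesis using fcoord_agree[OF fbas_agree[OF assms]] by simp
qed

lemma fcoord_br: assumes "x \<in> {1..10}" "i \<in> {1..10}"
  shows "fcoord (mbr (fbas x) (fbas i)) = vv x i"
  unfolding vv_def
  by (rule fcoord_agree[OF mbr_agree[OF fbas_agree[OF assms(1)] fbas_agree[OF assms(2)]]])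

lemma coeff_zero: "is_coeff3 \<phi> \<Longrightarrow> a \<notin> {1..7} \<or> b \<notin> {1..7} \<or> c \<notin> {1..7} \<Longrightarrow> \<phi> a b c = 0"
  unfolding is_coeff3_def by blast

lemma delta_sum: "(\<And>k. k \<notin> {1..7} \<Longrightarrow> g k = 0) \<Longrightarrow> (\<Sum>c=1..7. g c * (if c = k then 1 else 0)) = (g (k::nat) :: real)"
proof (cases "k \<in> {1..7}")
  case True
  have "(\<Sum>c=1..7. g c * (if c = k then 1 else 0)) = (\<Sum>c=1..7. if c = k then g c else 0)"
    by (rule sum.cong) auto
  also have "\<dots> = g k" using True by (simp add: sum.delta)
  finally show ?thesis .
next
  case False
  assume h: "\<And>k. k \<notin> {1..7} \<Longrightarrow> g k = 0"
  have "(\<Sum>c=1..7. g c * (if c = k then 1 else 0)) = (\<Sum>c\<in>{1..7::nat}. (0::real))"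
    by (rule sum.cong) (use False in auto)
  then show ?thesis using h[OF False] by simp
qed

lemma eval3_1: assumes "is_coeff3 \<phi>" "j \<in> {1..10}" "k \<in> {1..10}"
  shows "eval3 \<phi> Y (fbas j) (fbas k) = (\<Sum>a=1..7. \<phi> a j k * fcoord Y a)"
proof -
  have "eval3 \<phi> Y (fbas j) (fbas k) = (\<Sum>a=1..7. \<Sum>b=1..7. \<Sum>c=1..7.
      (\<phi> a b c * fcoord Y a * (if b = j then 1 else 0)) * (if c = k then 1 else 0))"
    unfolding eval3_def fcoord_fbas[OF assms(2)] fcoord_fbas[OF assms(3)] by simp
  also have "\<dots> = (\<Sum>a=1..7. \<Sum>b=1..7. (\<phi> a b k * fcoord Y a) * (if b = j then 1 else 0))"
    by (subst delta_sum) (auto simp: coeff_zero[OF assms(1)])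
  also have "\<dots> = (\<Sum>a=1..7. \<phi> a j k * fcoord Y a)"
    by (subst delta_sum) (auto simp: coeff_zero[OF assms(1)])
  finally show ?thesis .
qed

lemma eval3_2: assumes "is_coeff3 \<phi>" "i \<in> {1..10}" "k \<in> {1..10}"
  shows "eval3 \<phi> (fbas i) Y (fbas k) = (\<Sum>b=1..7. \<phi> i b k * fcoord Y b)"
proof -
  have "eval3 \<phi> (fbas i) Y (fbas k) = (\<Sum>a=1..7. \<Sum>b=1..7. \<Sum>c=1..7.
      (\<phi> a b c * fcoord Y b * (if a = i then 1 else 0)) * (if c = k then 1 else 0))"
    unfolding eval3_def fcoord_fbas[OF assms(2)] fcoord_fbas[OF assms(3)] by (intro sum.cong refl) (simp add: mult_ac)
  also have "\<dots> = (\<Sum>a=1..7. \<Sum>b=1..7. (\<phi> a b k * fcoord Y b) * (if a = i then 1 else 0))"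
    by (subst delta_sum) (auto simp: coeff_zero[OF assms(1)])
  also have "\<dots> = (\<Sum>b=1..7. \<Sum>a=1..7. (\<phi> a b k * fcoord Y b) * (if a = i then 1 else 0))"
    by (rule sum.swap)
  also have "\<dots> = (\<Sum>b=1..7. \<phi> i b k * fcoord Y b)"
    by (subst delta_sum) (auto simp: coeff_zero[OF assms(1)])
  finally show ?thesis .
qed

lemma eval3_3: assumes "is_coeff3 \<phi>" "i \<in> {1..10}" "j \<in> {1..10}"
  shows "eval3 \<phi> (fbas i) (fbas j) Y = (\<Sum>c=1..7. \<phi> i j c * fcoord Y c)"
proof -
  have "eval3 \<phi> (fbas i) (fbas j) Y = (\<Sum>a=1..7. \<Sum>b=1..7. \<Sum>c=1..7.
      (\<phi> a b c * fcoord Y c * (if a = i then 1 else 0)) * (if b = j then 1 else 0))"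
    unfolding eval3_def fcoord_fbas[OF assms(2)] fcoord_fbas[OF assms(3)] by (intro sum.cong refl) (simp add: mult_ac)
  also have "\<dots> = (\<Sum>a=1..7. \<Sum>c=1..7. \<Sum>b=1..7. (\<phi> a b c * fcoord Y c * (if a = i then 1 else 0)) * (if b = j then 1 else 0))"
    by (rule sum.cong[OF refl]) (rule sum.swap[where A="{1..7::nat}" and B="{1..7::nat}"])
  also have "\<dots> = (\<Sum>a=1..7. \<Sum>c=1..7. (\<phi> a j c * fcoord Y c) * (if a = i then 1 else 0))"
    by (subst delta_sum) (auto simp: coeff_zero[OF assms(1)])
  also have "\<dots> = (\<Sum>c=1..7. \<Sum>a=1..7. (\<phi> a j c * fcoord Y c) * (if a = i then 1 else 0))"
    by (rule sum.swap)
  also have "\<dots> = (\<Sum>c=1..7. \<phi> i j c * fcoord Y c)"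
    by (subst delta_sum) (auto simp: coeff_zero[OF assms(1)])
  finally show ?thesis .
qed

lemma lie_basis: assumes "is_coeff3 \<phi>" "x \<in> {1..10}" "i \<in> {1..10}" "j \<in> {1..10}" "k \<in> {1..10}"
  shows "lie_deriv3 (fbas x) \<phi> (fbas i) (fbas j) (fbas k) =
    - sv x i (\<lambda>a. \<phi> a j k) - sv x j (\<lambda>a. \<phi> i a k) - sv x k (\<lambda>a. \<phi> i j a)"
  unfolding lie_deriv3_def eval3_1[OF assms(1,4,5)] eval3_2[OF assms(1,3,5)] eval3_3[OF assms(1,3,4)]
    fcoord_br[OF assms(2,3)] fcoord_br[OF assms(2,4)] fcoord_br[OF assms(2,5)] set7 sv_def ..

lemma sv_8_1 [simp]: "sv 8 1 g = 0"
  by (simp add: sv_def vv_def cfa_def brk_def ea_def)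

lemma sv_8_2 [simp]: "sv 8 2 g = 0"
  by (simp add: sv_def vv_def cfa_def brk_def ea_def)

lemma sv_8_3 [simp]: "sv 8 3 g = g 1"
  by (simp add: sv_def vv_def cfa_def brk_def ea_def)

lemma sv_8_4 [simp]: "sv 8 4 g = 0"
  by (simp add: sv_def vv_def cfa_def brk_def ea_def)

lemma sv_8_5 [simp]: "sv 8 5 g = 2 * g 2"
  by (simp add: sv_def vv_def cfa_def brk_def ea_def)

lemma sv_8_6 [simp]: "sv 8 6 g = g 3"
  by (simp add: sv_def vv_def cfa_def brk_def ea_def)

lemma sv_8_7 [simp]: "sv 8 7 g = - (2 * g 5)"
  by (simp add: sv_def vv_def cfa_def brk_def ea_def)

lemma sv_8_8 [simp]: "sv 8 8 g = 0"
  by (simp add: sv_def vv_def cfa_def brk_def ea_def)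

lemma sv_8_9 [simp]: "sv 8 9 g = 0"
  by (simp add: sv_def vv_def cfa_def brk_def ea_def)

lemma sv_8_10 [simp]: "sv 8 10 g = 0"
  by (simp add: sv_def vv_def cfa_def brk_def ea_def)

lemma sv_9_1 [simp]: "sv 9 1 g = - (2 * g 1)"
  by (simp add: sv_def vv_def cfa_def brk_def ea_def)

lemma sv_9_2 [simp]: "sv 9 2 g = - (2 * g 2)"
  by (simp add: sv_def vv_def cfa_def brk_def ea_def)

lemma sv_9_3 [simp]: "sv 9 3 g = 0"
  by (simp add: sv_def vv_def cfa_def brk_def ea_def)

lemma sv_9_4 [simp]: "sv 9 4 g = 0"
  by (simp add: sv_def vv_def cfa_def brk_def ea_def)

lemma sv_9_5 [simp]: "sv 9 5 g = 0"
  by (simp add: sv_def vv_def cfa_def brk_def ea_def)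

lemma sv_9_6 [simp]: "sv 9 6 g = 2 * g 6"
  by (simp add: sv_def vv_def cfa_def brk_def ea_def)

lemma sv_9_7 [simp]: "sv 9 7 g = 2 * g 7"
  by (simp add: sv_def vv_def cfa_def brk_def ea_def)

lemma sv_9_8 [simp]: "sv 9 8 g = 0"
  by (simp add: sv_def vv_def cfa_def brk_def ea_def)

lemma sv_9_9 [simp]: "sv 9 9 g = 0"
  by (simp add: sv_def vv_def cfa_def brk_def ea_def)

lemma sv_9_10 [simp]: "sv 9 10 g = 0"
  by (simp add: sv_def vv_def cfa_def brk_def ea_def)

lemma sv_10_1 [simp]: "sv 10 1 g = 2 * g 3"
  by (simp add: sv_def vv_def cfa_def brk_def ea_def)

lemma sv_10_2 [simp]: "sv 10 2 g = g 5"
  by (simp add: sv_def vv_def cfa_def brk_def ea_def)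

lemma sv_10_3 [simp]: "sv 10 3 g = 2 * g 6"
  by (simp add: sv_def vv_def cfa_def brk_def ea_def)

lemma sv_10_4 [simp]: "sv 10 4 g = 0"
  by (simp add: sv_def vv_def cfa_def brk_def ea_def)

lemma sv_10_5 [simp]: "sv 10 5 g = - g 7"
  by (simp add: sv_def vv_def cfa_def brk_def ea_def)

lemma sv_10_6 [simp]: "sv 10 6 g = 0"
  by (simp add: sv_def vv_def cfa_def brk_def ea_def)

lemma sv_10_7 [simp]: "sv 10 7 g = 0"
  by (simp add: sv_def vv_def cfa_def brk_def ea_def)

lemma sv_10_8 [simp]: "sv 10 8 g = 0"
  by (simp add: sv_def vv_def cfa_def brk_def ea_def)

lemma sv_10_9 [simp]: "sv 10 9 g = 0"
  by (simp add: sv_def vv_def cfa_def brk_def ea_def)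

lemma sv_10_10 [simp]: "sv 10 10 g = 0"
  by (simp add: sv_def vv_def cfa_def brk_def ea_def)

lemma sv_8_1s [simp]: "sv 8 (Suc 0) g = 0"
  by (simp add: sv_def vv_def cfa_def brk_def ea_def)

lemma sv_9_1s [simp]: "sv 9 (Suc 0) g = - (2 * g 1)"
  by (simp add: sv_def vv_def cfa_def brk_def ea_def)

lemma sv_10_1s [simp]: "sv 10 (Suc 0) g = 2 * g 3"
  by (simp add: sv_def vv_def cfa_def brk_def ea_def)

definition inv_cond :: "(nat \<Rightarrow> nat \<Rightarrow> nat \<Rightarrow> real) \<Rightarrow> bool" where
  "inv_cond \<phi> \<longleftrightarrow> (\<forall>x\<in>{8,9,10}. \<forall>i\<in>{1..10}. \<forall>j\<in>{1..10}. \<forall>k\<in>{1..10}.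
      sv x i (\<lambda>a. \<phi> a j k) + sv x j (\<lambda>a. \<phi> i a k) + sv x k (\<lambda>a. \<phi> i j a) = 0)"

lemma Ds_inv_iff: assumes "is_coeff3 \<phi>" shows "Ds_invariant \<phi> \<longleftrightarrow> inv_cond \<phi>"
proof -
  have 1: "Ds_invariant \<phi> \<longleftrightarrow> (\<forall>x\<in>{8,9,10}. \<forall>i\<in>{1..10}. \<forall>j\<in>{1..10}. \<forall>k\<in>{1..10}.
      lie_deriv3 (fbas x) \<phi> (fbas i) (fbas j) (fbas k) = 0)"
    unfolding Ds_invariant_def by simp
  have 2: "x \<in> {8,9,10} \<Longrightarrow> x \<in> {1..10::nat}" for x by auto
  show ?thesis unfolding 1 inv_cond_def
  proof (intro ball_cong refl)
    fix x i j k :: nat assume h: "x \<in> {8,9,10}" "i \<in> {1..10}" "j \<in> {1..10}" "k \<in> {1..10}"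
    have n: "\<And>a b c::real. (- a - b - c = 0) = (a + b + c = 0)" by linarith
    show "(lie_deriv3 (fbas x) \<phi> (fbas i) (fbas j) (fbas k) = 0) =
      (sv x i (\<lambda>a. \<phi> a j k) + sv x j (\<lambda>a. \<phi> i a k) + sv x k (\<lambda>a. \<phi> i j a) = 0)"
      unfolding lie_basis[OF assms 2[OF h(1)] h(2-4)] n ..
  qed
qed

primrec altf :: "nat list \<Rightarrow> ((nat \<Rightarrow> nat) \<Rightarrow> real) \<Rightarrow> real" where
  "altf [] F = F id"
| "altf (a # rest) F = altf rest (\<lambda>q. F (q(a := a)))
     - sum_list (map (\<lambda>b. altf rest (\<lambda>q. F ((Transposition.transpose a b \<circ> q)(a := b)))) rest)"

declare altf.simps [simp del]

lemma altf_perm: "distinct xs \<Longrightarrow> (\<Sum>p\<in>{p. p permutes set xs}. of_int (sign p) * F p) = altf xs F"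
proof (induction xs arbitrary: F)
  case Nil
  have "{p. p permutes set []} = {id}" by auto
  then show ?case by (simp add: altf.simps id_def)
next
  case (Cons a rest)
  let ?S = "set rest"
  have fin: "finite ?S" and aS: "a \<notin> ?S" and dr: "distinct rest" using Cons.prems by auto
  have qa: "q a = a" if "q permutes ?S" for q using permutes_not_in[OF that aS] .
  have pq: "permutation q" if "q permutes ?S" for q using permutes_imp_permutation[OF fin that] .
  have "(\<Sum>p\<in>{p. p permutes set (a # rest)}. of_int (sign p) * F p) =
    (\<Sum>b\<in>insert a ?S. \<Sum>q\<in>{p. p permutes ?S}. of_int (sign (Transposition.transpose a b \<circ> q)) * F (Transposition.transpose a b \<circ> q))"
    using sum_over_permutations_insert[OF fin aS, of "\<lambda>p. of_int (sign p) * F p"] by simp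
  also have "\<dots> = (\<Sum>q\<in>{p. p permutes ?S}. of_int (sign (Transposition.transpose a a \<circ> q)) * F (Transposition.transpose a a \<circ> q))
     + (\<Sum>b\<in>?S. \<Sum>q\<in>{p. p permutes ?S}. of_int (sign (Transposition.transpose a b \<circ> q)) * F (Transposition.transpose a b \<circ> q))"
    using fin aS by (simp add: sum.insert)
  also have "(\<Sum>q\<in>{p. p permutes ?S}. of_int (sign (Transposition.transpose a a \<circ> q)) * F (Transposition.transpose a a \<circ> q))
      = (\<Sum>q\<in>{p. p permutes ?S}. of_int (sign q) * (\<lambda>q. F (q(a := a))) q)"
  proof (rule sum.cong[OF refl])
    fix q assume "q \<in> {p. p permutes ?S}"
    then have "q a = a" using qa by auto
    then have "q(a := a) = q" by auto
    then show "of_int (sign (Transposition.transpose a a \<circ> q)) * F (Transposition.transpose a a \<circ> q) = of_int (sign q) * (\<lambda>q. F (q(a := a))) q"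
      by simp
  qed
  also have "\<dots> = altf rest (\<lambda>q. F (q(a := a)))" using Cons.IH[OF dr] .
  also have "(\<Sum>b\<in>?S. \<Sum>q\<in>{p. p permutes ?S}. of_int (sign (Transposition.transpose a b \<circ> q)) * F (Transposition.transpose a b \<circ> q))
     = (\<Sum>b\<in>?S. - (\<Sum>q\<in>{p. p permutes ?S}. of_int (sign q) * (\<lambda>q. F ((Transposition.transpose a b \<circ> q)(a := b))) q))"
  proof (rule sum.cong[OF refl])
    fix b assume b: "b \<in> ?S"
    then have ab: "a \<noteq> b" using aS by auto
    have "(\<Sum>q\<in>{p. p permutes ?S}. of_int (sign (Transposition.transpose a b \<circ> q)) * F (Transposition.transpose a b \<circ> q))
      = (\<Sum>q\<in>{p. p permutes ?S}. - (of_int (sign q) * (\<lambda>q. F ((Transposition.transpose a b \<circ> q)(a := b))) q))"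
    proof (rule sum.cong[OF refl])
      fix q assume "q \<in> {p. p permutes ?S}"
      then have q: "q permutes ?S" by auto
      have e: "(Transposition.transpose a b \<circ> q)(a := b) = Transposition.transpose a b \<circ> q"
        using qa[OF q] by (auto simp: fun_eq_iff)
      have s: "sign (Transposition.transpose a b \<circ> q) = - sign q"
        using sign_compose[OF permutation_swap_id pq[OF q]] ab by (simp add: sign_swap_id)
      show "of_int (sign (Transposition.transpose a b \<circ> q)) * F (Transposition.transpose a b \<circ> q)
        = - (of_int (sign q) * (\<lambda>q. F ((Transposition.transpose a b \<circ> q)(a := b))) q)"
        unfolding e s by simp
    qed
    then show "(\<Sum>q\<in>{p. p permutes ?S}. of_int (sign (Transposition.transpose a b \<circ> q)) * F (Transposition.transpose a b \<circ> q))
      = - (\<Sum>q\<in>{p. p permutes ?S}. of_int (sign q) * (\<lambda>q. F ((Transposition.transpose a b \<circ> q)(a := b))) q)"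
      by (simp add: sum_negf)
  qed
  also have "\<dots> = (\<Sum>b\<in>?S. - altf rest (\<lambda>q. F ((Transposition.transpose a b \<circ> q)(a := b))))"
    using Cons.IH[OF dr] by simp
  also have "\<dots> = - sum_list (map (\<lambda>b. altf rest (\<lambda>q. F ((Transposition.transpose a b \<circ> q)(a := b)))) rest)"
    using dr by (simp add: sum_list_distinct_conv_sum_set sum_negf)
  finally show ?case by (simp only: altf.simps diff_conv_add_uminus)
qed

lemma altf_zero [simp]: "altf xs (\<lambda>q. 0) = 0"
  by (induction xs) (simp_all add: altf.simps)

lemma altf_Cons: "altf (a # rest) F = altf rest (\<lambda>q. F (q(a := a)))
     - sum_list (map (\<lambda>b. altf rest (\<lambda>q. F ((Transposition.transpose a b \<circ> q)(a := b)))) rest)"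
  by (simp add: altf.simps)

lemma altf_Nil: "altf [] F = F id" by (simp add: altf.simps)

lemma wedge_altf: "wedge223_top \<beta> \<gamma> \<phi> =
  altf [1,2,3,4,5,6,7] (\<lambda>p. \<beta> (p 1) (p 2) * \<gamma> (p 3) (p 4) * \<phi> (p 5) (p 6) (p 7)) / 24"
proof -
  have s: "{1..7::nat} = set [1,2,3,4,5,6,7]" unfolding set7 by simp
  have "(\<Sum>p\<in>{p. p permutes {1..7::nat}}. of_int (sign p) * \<beta> (p 1) (p 2) * \<gamma> (p 3) (p 4) * \<phi> (p 5) (p 6) (p 7))
    = (\<Sum>p\<in>{p. p permutes set [1,2,3,4,5,6,7]}. of_int (sign p) * (\<lambda>p. \<beta> (p 1) (p 2) * \<gamma> (p 3) (p 4) * \<phi> (p 5) (p 6) (p 7)) p)"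
    unfolding s by (simp add: mult.assoc)
  also have "\<dots> = altf [1,2,3,4,5,6,7] (\<lambda>p. \<beta> (p 1) (p 2) * \<gamma> (p 3) (p 4) * \<phi> (p 5) (p 6) (p 7))"
    by (rule altf_perm) simp
  finally show ?thesis unfolding wedge223_top_def by simp
qed

lemma pf_tab:
  "phi_family q 1 1 1 = 0"
  "phi_family q 1 1 2 = 0"
  "phi_family q 1 1 3 = 0"
  "phi_family q 1 1 4 = 0"
  "phi_family q 1 1 5 = 0"
  "phi_family q 1 1 6 = 0"
  "phi_family q 1 1 7 = 0"
  "phi_family q 1 2 1 = 0"
  "phi_family q 1 2 2 = 0"
  "phi_family q 1 2 3 = 0"
  "phi_family q 1 2 4 = 0"
  "phi_family q 1 2 5 = 0"
  "phi_family q 1 2 6 = 0"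
  "phi_family q 1 2 7 = 0"
  "phi_family q 1 3 1 = 0"
  "phi_family q 1 3 2 = 0"
  "phi_family q 1 3 3 = 0"
  "phi_family q 1 3 4 = 0"
  "phi_family q 1 3 5 = 0"
  "phi_family q 1 3 6 = q"
  "phi_family q 1 3 7 = 0"
  "phi_family q 1 4 1 = 0"
  "phi_family q 1 4 2 = 0"
  "phi_family q 1 4 3 = 0"
  "phi_family q 1 4 4 = 0"
  "phi_family q 1 4 5 = 0"
  "phi_family q 1 4 6 = 0"
  "phi_family q 1 4 7 = 2"
  "phi_family q 1 5 1 = 0"
  "phi_family q 1 5 2 = 0"
  "phi_family q 1 5 3 = 0"
  "phi_family q 1 5 4 = 0"
  "phi_family q 1 5 5 = 0"
  "phi_family q 1 5 6 = 0"
  "phi_family q 1 5 7 = 0"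
  "phi_family q 1 6 1 = 0"
  "phi_family q 1 6 2 = 0"
  "phi_family q 1 6 3 = - (q)"
  "phi_family q 1 6 4 = 0"
  "phi_family q 1 6 5 = 0"
  "phi_family q 1 6 6 = 0"
  "phi_family q 1 6 7 = 0"
  "phi_family q 1 7 1 = 0"
  "phi_family q 1 7 2 = 0"
  "phi_family q 1 7 3 = 0"
  "phi_family q 1 7 4 = - (2)"
  "phi_family q 1 7 5 = 0"
  "phi_family q 1 7 6 = 0"
  "phi_family q 1 7 7 = 0"
  "phi_family q 2 1 1 = 0"
  "phi_family q 2 1 2 = 0"
  "phi_family q 2 1 3 = 0"
  "phi_family q 2 1 4 = 0"
  "phi_family q 2 1 5 = 0"
  "phi_family q 2 1 6 = 0"
  "phi_family q 2 1 7 = 0"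
  "phi_family q 2 2 1 = 0"
  "phi_family q 2 2 2 = 0"
  "phi_family q 2 2 3 = 0"
  "phi_family q 2 2 4 = 0"
  "phi_family q 2 2 5 = 0"
  "phi_family q 2 2 6 = 0"
  "phi_family q 2 2 7 = 0"
  "phi_family q 2 3 1 = 0"
  "phi_family q 2 3 2 = 0"
  "phi_family q 2 3 3 = 0"
  "phi_family q 2 3 4 = 0"
  "phi_family q 2 3 5 = 0"
  "phi_family q 2 3 6 = 0"
  "phi_family q 2 3 7 = 0"
  "phi_family q 2 4 1 = 0"
  "phi_family q 2 4 2 = 0"
  "phi_family q 2 4 3 = 0"
  "phi_family q 2 4 4 = 0"
  "phi_family q 2 4 5 = 0"
  "phi_family q 2 4 6 = 1/2"
  "phi_family q 2 4 7 = 0"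
  "phi_family q 2 5 1 = 0"
  "phi_family q 2 5 2 = 0"
  "phi_family q 2 5 3 = 0"
  "phi_family q 2 5 4 = 0"
  "phi_family q 2 5 5 = 0"
  "phi_family q 2 5 6 = 0"
  "phi_family q 2 5 7 = 1/q"
  "phi_family q 2 6 1 = 0"
  "phi_family q 2 6 2 = 0"
  "phi_family q 2 6 3 = 0"
  "phi_family q 2 6 4 = - (1/2)"
  "phi_family q 2 6 5 = 0"
  "phi_family q 2 6 6 = 0"
  "phi_family q 2 6 7 = 0"
  "phi_family q 2 7 1 = 0"
  "phi_family q 2 7 2 = 0"
  "phi_family q 2 7 3 = 0"
  "phi_family q 2 7 4 = 0"
  "phi_family q 2 7 5 = - (1/q)"
  "phi_family q 2 7 6 = 0"
  "phi_family q 2 7 7 = 0"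
  "phi_family q 3 1 1 = 0"
  "phi_family q 3 1 2 = 0"
  "phi_family q 3 1 3 = 0"
  "phi_family q 3 1 4 = 0"
  "phi_family q 3 1 5 = 0"
  "phi_family q 3 1 6 = - (q)"
  "phi_family q 3 1 7 = 0"
  "phi_family q 3 2 1 = 0"
  "phi_family q 3 2 2 = 0"
  "phi_family q 3 2 3 = 0"
  "phi_family q 3 2 4 = 0"
  "phi_family q 3 2 5 = 0"
  "phi_family q 3 2 6 = 0"
  "phi_family q 3 2 7 = 0"
  "phi_family q 3 3 1 = 0"
  "phi_family q 3 3 2 = 0"
  "phi_family q 3 3 3 = 0"
  "phi_family q 3 3 4 = 0"
  "phi_family q 3 3 5 = 0"
  "phi_family q 3 3 6 = 0"
  "phi_family q 3 3 7 = 0"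
  "phi_family q 3 4 1 = 0"
  "phi_family q 3 4 2 = 0"
  "phi_family q 3 4 3 = 0"
  "phi_family q 3 4 4 = 0"
  "phi_family q 3 4 5 = 1"
  "phi_family q 3 4 6 = 0"
  "phi_family q 3 4 7 = 0"
  "phi_family q 3 5 1 = 0"
  "phi_family q 3 5 2 = 0"
  "phi_family q 3 5 3 = 0"
  "phi_family q 3 5 4 = - (1)"
  "phi_family q 3 5 5 = 0"
  "phi_family q 3 5 6 = 0"
  "phi_family q 3 5 7 = 0"
  "phi_family q 3 6 1 = q"
  "phi_family q 3 6 2 = 0"
  "phi_family q 3 6 3 = 0"
  "phi_family q 3 6 4 = 0"
  "phi_family q 3 6 5 = 0"
  "phi_family q 3 6 6 = 0"
  "phi_family q 3 6 7 = 0"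
  "phi_family q 3 7 1 = 0"
  "phi_family q 3 7 2 = 0"
  "phi_family q 3 7 3 = 0"
  "phi_family q 3 7 4 = 0"
  "phi_family q 3 7 5 = 0"
  "phi_family q 3 7 6 = 0"
  "phi_family q 3 7 7 = 0"
  "phi_family q 4 1 1 = 0"
  "phi_family q 4 1 2 = 0"
  "phi_family q 4 1 3 = 0"
  "phi_family q 4 1 4 = 0"
  "phi_family q 4 1 5 = 0"
  "phi_family q 4 1 6 = 0"
  "phi_family q 4 1 7 = - (2)"
  "phi_family q 4 2 1 = 0"
  "phi_family q 4 2 2 = 0"
  "phi_family q 4 2 3 = 0"
  "phi_family q 4 2 4 = 0"
  "phi_family q 4 2 5 = 0"
  "phi_family q 4 2 6 = - (1/2)"
  "phi_family q 4 2 7 = 0"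
  "phi_family q 4 3 1 = 0"
  "phi_family q 4 3 2 = 0"
  "phi_family q 4 3 3 = 0"
  "phi_family q 4 3 4 = 0"
  "phi_family q 4 3 5 = - (1)"
  "phi_family q 4 3 6 = 0"
  "phi_family q 4 3 7 = 0"
  "phi_family q 4 4 1 = 0"
  "phi_family q 4 4 2 = 0"
  "phi_family q 4 4 3 = 0"
  "phi_family q 4 4 4 = 0"
  "phi_family q 4 4 5 = 0"
  "phi_family q 4 4 6 = 0"
  "phi_family q 4 4 7 = 0"
  "phi_family q 4 5 1 = 0"
  "phi_family q 4 5 2 = 0"
  "phi_family q 4 5 3 = 1"
  "phi_family q 4 5 4 = 0"
  "phi_family q 4 5 5 = 0"
  "phi_family q 4 5 6 = 0"
  "phi_family q 4 5 7 = 0"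
  "phi_family q 4 6 1 = 0"
  "phi_family q 4 6 2 = 1/2"
  "phi_family q 4 6 3 = 0"
  "phi_family q 4 6 4 = 0"
  "phi_family q 4 6 5 = 0"
  "phi_family q 4 6 6 = 0"
  "phi_family q 4 6 7 = 0"
  "phi_family q 4 7 1 = 2"
  "phi_family q 4 7 2 = 0"
  "phi_family q 4 7 3 = 0"
  "phi_family q 4 7 4 = 0"
  "phi_family q 4 7 5 = 0"
  "phi_family q 4 7 6 = 0"
  "phi_family q 4 7 7 = 0"
  "phi_family q 5 1 1 = 0"
  "phi_family q 5 1 2 = 0"
  "phi_family q 5 1 3 = 0"
  "phi_family q 5 1 4 = 0"
  "phi_family q 5 1 5 = 0"
  "phi_family q 5 1 6 = 0"
  "phi_family q 5 1 7 = 0"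
  "phi_family q 5 2 1 = 0"
  "phi_family q 5 2 2 = 0"
  "phi_family q 5 2 3 = 0"
  "phi_family q 5 2 4 = 0"
  "phi_family q 5 2 5 = 0"
  "phi_family q 5 2 6 = 0"
  "phi_family q 5 2 7 = - (1/q)"
  "phi_family q 5 3 1 = 0"
  "phi_family q 5 3 2 = 0"
  "phi_family q 5 3 3 = 0"
  "phi_family q 5 3 4 = 1"
  "phi_family q 5 3 5 = 0"
  "phi_family q 5 3 6 = 0"
  "phi_family q 5 3 7 = 0"
  "phi_family q 5 4 1 = 0"
  "phi_family q 5 4 2 = 0"
  "phi_family q 5 4 3 = - (1)"
  "phi_family q 5 4 4 = 0"
  "phi_family q 5 4 5 = 0"
  "phi_family q 5 4 6 = 0"
  "phi_family q 5 4 7 = 0"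
  "phi_family q 5 5 1 = 0"
  "phi_family q 5 5 2 = 0"
  "phi_family q 5 5 3 = 0"
  "phi_family q 5 5 4 = 0"
  "phi_family q 5 5 5 = 0"
  "phi_family q 5 5 6 = 0"
  "phi_family q 5 5 7 = 0"
  "phi_family q 5 6 1 = 0"
  "phi_family q 5 6 2 = 0"
  "phi_family q 5 6 3 = 0"
  "phi_family q 5 6 4 = 0"
  "phi_family q 5 6 5 = 0"
  "phi_family q 5 6 6 = 0"
  "phi_family q 5 6 7 = 0"
  "phi_family q 5 7 1 = 0"
  "phi_family q 5 7 2 = 1/q"
  "phi_family q 5 7 3 = 0"
  "phi_family q 5 7 4 = 0"
  "phi_family q 5 7 5 = 0"
  "phi_family q 5 7 6 = 0"
  "phi_family q 5 7 7 = 0"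
  "phi_family q 6 1 1 = 0"
  "phi_family q 6 1 2 = 0"
  "phi_family q 6 1 3 = q"
  "phi_family q 6 1 4 = 0"
  "phi_family q 6 1 5 = 0"
  "phi_family q 6 1 6 = 0"
  "phi_family q 6 1 7 = 0"
  "phi_family q 6 2 1 = 0"
  "phi_family q 6 2 2 = 0"
  "phi_family q 6 2 3 = 0"
  "phi_family q 6 2 4 = 1/2"
  "phi_family q 6 2 5 = 0"
  "phi_family q 6 2 6 = 0"
  "phi_family q 6 2 7 = 0"
  "phi_family q 6 3 1 = - (q)"
  "phi_family q 6 3 2 = 0"
  "phi_family q 6 3 3 = 0"
  "phi_family q 6 3 4 = 0"
  "phi_family q 6 3 5 = 0"
  "phi_family q 6 3 6 = 0"
  "phi_family q 6 3 7 = 0"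
  "phi_family q 6 4 1 = 0"
  "phi_family q 6 4 2 = - (1/2)"
  "phi_family q 6 4 3 = 0"
  "phi_family q 6 4 4 = 0"
  "phi_family q 6 4 5 = 0"
  "phi_family q 6 4 6 = 0"
  "phi_family q 6 4 7 = 0"
  "phi_family q 6 5 1 = 0"
  "phi_family q 6 5 2 = 0"
  "phi_family q 6 5 3 = 0"
  "phi_family q 6 5 4 = 0"
  "phi_family q 6 5 5 = 0"
  "phi_family q 6 5 6 = 0"
  "phi_family q 6 5 7 = 0"
  "phi_family q 6 6 1 = 0"
  "phi_family q 6 6 2 = 0"
  "phi_family q 6 6 3 = 0"
  "phi_family q 6 6 4 = 0"
  "phi_family q 6 6 5 = 0"
  "phi_family q 6 6 6 = 0"
  "phi_family q 6 6 7 = 0"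
  "phi_family q 6 7 1 = 0"
  "phi_family q 6 7 2 = 0"
  "phi_family q 6 7 3 = 0"
  "phi_family q 6 7 4 = 0"
  "phi_family q 6 7 5 = 0"
  "phi_family q 6 7 6 = 0"
  "phi_family q 6 7 7 = 0"
  "phi_family q 7 1 1 = 0"
  "phi_family q 7 1 2 = 0"
  "phi_family q 7 1 3 = 0"
  "phi_family q 7 1 4 = 2"
  "phi_family q 7 1 5 = 0"
  "phi_family q 7 1 6 = 0"
  "phi_family q 7 1 7 = 0"
  "phi_family q 7 2 1 = 0"
  "phi_family q 7 2 2 = 0"
  "phi_family q 7 2 3 = 0"
  "phi_family q 7 2 4 = 0"
  "phi_family q 7 2 5 = 1/q"
  "phi_family q 7 2 6 = 0"
  "phi_family q 7 2 7 = 0"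
  "phi_family q 7 3 1 = 0"
  "phi_family q 7 3 2 = 0"
  "phi_family q 7 3 3 = 0"
  "phi_family q 7 3 4 = 0"
  "phi_family q 7 3 5 = 0"
  "phi_family q 7 3 6 = 0"
  "phi_family q 7 3 7 = 0"
  "phi_family q 7 4 1 = - (2)"
  "phi_family q 7 4 2 = 0"
  "phi_family q 7 4 3 = 0"
  "phi_family q 7 4 4 = 0"
  "phi_family q 7 4 5 = 0"
  "phi_family q 7 4 6 = 0"
  "phi_family q 7 4 7 = 0"
  "phi_family q 7 5 1 = 0"
  "phi_family q 7 5 2 = - (1/q)"
  "phi_family q 7 5 3 = 0"
  "phi_family q 7 5 4 = 0"
  "phi_family q 7 5 5 = 0"
  "phi_family q 7 5 6 = 0"
  "phi_family q 7 5 7 = 0"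
  "phi_family q 7 6 1 = 0"
  "phi_family q 7 6 2 = 0"
  "phi_family q 7 6 3 = 0"
  "phi_family q 7 6 4 = 0"
  "phi_family q 7 6 5 = 0"
  "phi_family q 7 6 6 = 0"
  "phi_family q 7 6 7 = 0"
  "phi_family q 7 7 1 = 0"
  "phi_family q 7 7 2 = 0"
  "phi_family q 7 7 3 = 0"
  "phi_family q 7 7 4 = 0"
  "phi_family q 7 7 5 = 0"
  "phi_family q 7 7 6 = 0"
  "phi_family q 7 7 7 = 0"
  "phi_family q (Suc 0) (Suc 0) (Suc 0) = 0"
  "phi_family q (Suc 0) (Suc 0) 2 = 0"
  "phi_family q (Suc 0) (Suc 0) 3 = 0"
  "phi_family q (Suc 0) (Suc 0) 4 = 0"
  "phi_family q (Suc 0) (Suc 0) 5 = 0"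
  "phi_family q (Suc 0) (Suc 0) 6 = 0"
  "phi_family q (Suc 0) (Suc 0) 7 = 0"
  "phi_family q (Suc 0) 2 (Suc 0) = 0"
  "phi_family q (Suc 0) 2 2 = 0"
  "phi_family q (Suc 0) 2 3 = 0"
  "phi_family q (Suc 0) 2 4 = 0"
  "phi_family q (Suc 0) 2 5 = 0"
  "phi_family q (Suc 0) 2 6 = 0"
  "phi_family q (Suc 0) 2 7 = 0"
  "phi_family q (Suc 0) 3 (Suc 0) = 0"
  "phi_family q (Suc 0) 3 2 = 0"
  "phi_family q (Suc 0) 3 3 = 0"
  "phi_family q (Suc 0) 3 4 = 0"
  "phi_family q (Suc 0) 3 5 = 0"
  "phi_family q (Suc 0) 3 6 = q"
  "phi_family q (Suc 0) 3 7 = 0"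
  "phi_family q (Suc 0) 4 (Suc 0) = 0"
  "phi_family q (Suc 0) 4 2 = 0"
  "phi_family q (Suc 0) 4 3 = 0"
  "phi_family q (Suc 0) 4 4 = 0"
  "phi_family q (Suc 0) 4 5 = 0"
  "phi_family q (Suc 0) 4 6 = 0"
  "phi_family q (Suc 0) 4 7 = 2"
  "phi_family q (Suc 0) 5 (Suc 0) = 0"
  "phi_family q (Suc 0) 5 2 = 0"
  "phi_family q (Suc 0) 5 3 = 0"
  "phi_family q (Suc 0) 5 4 = 0"
  "phi_family q (Suc 0) 5 5 = 0"
  "phi_family q (Suc 0) 5 6 = 0"
  "phi_family q (Suc 0) 5 7 = 0"
  "phi_family q (Suc 0) 6 (Suc 0) = 0"
  "phi_family q (Suc 0) 6 2 = 0"
  "phi_family q (Suc 0) 6 3 = - (q)"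
  "phi_family q (Suc 0) 6 4 = 0"
  "phi_family q (Suc 0) 6 5 = 0"
  "phi_family q (Suc 0) 6 6 = 0"
  "phi_family q (Suc 0) 6 7 = 0"
  "phi_family q (Suc 0) 7 (Suc 0) = 0"
  "phi_family q (Suc 0) 7 2 = 0"
  "phi_family q (Suc 0) 7 3 = 0"
  "phi_family q (Suc 0) 7 4 = - (2)"
  "phi_family q (Suc 0) 7 5 = 0"
  "phi_family q (Suc 0) 7 6 = 0"
  "phi_family q (Suc 0) 7 7 = 0"
  "phi_family q 2 (Suc 0) (Suc 0) = 0"
  "phi_family q 2 (Suc 0) 2 = 0"
  "phi_family q 2 (Suc 0) 3 = 0"
  "phi_family q 2 (Suc 0) 4 = 0"
  "phi_family q 2 (Suc 0) 5 = 0"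
  "phi_family q 2 (Suc 0) 6 = 0"
  "phi_family q 2 (Suc 0) 7 = 0"
  "phi_family q 2 2 (Suc 0) = 0"
  "phi_family q 2 3 (Suc 0) = 0"
  "phi_family q 2 4 (Suc 0) = 0"
  "phi_family q 2 5 (Suc 0) = 0"
  "phi_family q 2 6 (Suc 0) = 0"
  "phi_family q 2 7 (Suc 0) = 0"
  "phi_family q 3 (Suc 0) (Suc 0) = 0"
  "phi_family q 3 (Suc 0) 2 = 0"
  "phi_family q 3 (Suc 0) 3 = 0"
  "phi_family q 3 (Suc 0) 4 = 0"
  "phi_family q 3 (Suc 0) 5 = 0"
  "phi_family q 3 (Suc 0) 6 = - (q)"
  "phi_family q 3 (Suc 0) 7 = 0"
  "phi_family q 3 2 (Suc 0) = 0"
  "phi_family q 3 3 (Suc 0) = 0"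
  "phi_family q 3 4 (Suc 0) = 0"
  "phi_family q 3 5 (Suc 0) = 0"
  "phi_family q 3 6 (Suc 0) = q"
  "phi_family q 3 7 (Suc 0) = 0"
  "phi_family q 4 (Suc 0) (Suc 0) = 0"
  "phi_family q 4 (Suc 0) 2 = 0"
  "phi_family q 4 (Suc 0) 3 = 0"
  "phi_family q 4 (Suc 0) 4 = 0"
  "phi_family q 4 (Suc 0) 5 = 0"
  "phi_family q 4 (Suc 0) 6 = 0"
  "phi_family q 4 (Suc 0) 7 = - (2)"
  "phi_family q 4 2 (Suc 0) = 0"
  "phi_family q 4 3 (Suc 0) = 0"
  "phi_family q 4 4 (Suc 0) = 0"
  "phi_family q 4 5 (Suc 0) = 0"
  "phi_family q 4 6 (Suc 0) = 0"
  "phi_family q 4 7 (Suc 0) = 2"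
  "phi_family q 5 (Suc 0) (Suc 0) = 0"
  "phi_family q 5 (Suc 0) 2 = 0"
  "phi_family q 5 (Suc 0) 3 = 0"
  "phi_family q 5 (Suc 0) 4 = 0"
  "phi_family q 5 (Suc 0) 5 = 0"
  "phi_family q 5 (Suc 0) 6 = 0"
  "phi_family q 5 (Suc 0) 7 = 0"
  "phi_family q 5 2 (Suc 0) = 0"
  "phi_family q 5 3 (Suc 0) = 0"
  "phi_family q 5 4 (Suc 0) = 0"
  "phi_family q 5 5 (Suc 0) = 0"
  "phi_family q 5 6 (Suc 0) = 0"
  "phi_family q 5 7 (Suc 0) = 0"
  "phi_family q 6 (Suc 0) (Suc 0) = 0"
  "phi_family q 6 (Suc 0) 2 = 0"
  "phi_family q 6 (Suc 0) 3 = q"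
  "phi_family q 6 (Suc 0) 4 = 0"
  "phi_family q 6 (Suc 0) 5 = 0"
  "phi_family q 6 (Suc 0) 6 = 0"
  "phi_family q 6 (Suc 0) 7 = 0"
  "phi_family q 6 2 (Suc 0) = 0"
  "phi_family q 6 3 (Suc 0) = - (q)"
  "phi_family q 6 4 (Suc 0) = 0"
  "phi_family q 6 5 (Suc 0) = 0"
  "phi_family q 6 6 (Suc 0) = 0"
  "phi_family q 6 7 (Suc 0) = 0"
  "phi_family q 7 (Suc 0) (Suc 0) = 0"
  "phi_family q 7 (Suc 0) 2 = 0"
  "phi_family q 7 (Suc 0) 3 = 0"
  "phi_family q 7 (Suc 0) 4 = 2"
  "phi_family q 7 (Suc 0) 5 = 0"
  "phi_family q 7 (Suc 0) 6 = 0"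
  "phi_family q 7 (Suc 0) 7 = 0"
  "phi_family q 7 2 (Suc 0) = 0"
  "phi_family q 7 3 (Suc 0) = 0"
  "phi_family q 7 4 (Suc 0) = - (2)"
  "phi_family q 7 5 (Suc 0) = 0"
  "phi_family q 7 6 (Suc 0) = 0"
  "phi_family q 7 7 (Suc 0) = 0"
  by (simp_all add: phi_family_def basic3_def)
 
lemma pf_out1 [simp]: "7 < a \<Longrightarrow> phi_family q a b c = 0"
  by (simp add: phi_family_def basic3_def)
lemma pf_out2 [simp]: "7 < b \<Longrightarrow> phi_family q a b c = 0"
  by (simp add: phi_family_def basic3_def)
lemma pf_out3 [simp]: "7 < c \<Longrightarrow> phi_family q a b c = 0"
  by (simp add: phi_family_def basic3_def)

lemma inv_pf: "inv_cond (phi_family q)"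
  unfolding inv_cond_def set10 by (simp add: pf_tab)

lemma compat_pf: assumes "q \<noteq> 0" shows "compatible gK (phi_family q)"
  unfolding compatible_def set7 using assms
  by (simp add: wedge_altf altf_Cons altf_Nil pf_tab gK_def odot_def)

definition phi5 :: "real \<Rightarrow> real \<Rightarrow> real \<Rightarrow> real \<Rightarrow> real \<Rightarrow> nat \<Rightarrow> nat \<Rightarrow> nat \<Rightarrow> real" where
  "phi5 A B C D E = (\<lambda>a b c. A * basic3 1 3 6 a b c
     + B * (basic3 2 3 6 a b c - 4 * basic3 1 3 7 a b c + 2 * basic3 1 5 6 a b c)
     + C * (basic3 2 5 6 a b c - 4 * basic3 1 5 7 a b c - 2 * basic3 2 3 7 a b c)
     + D * basic3 2 5 7 a b c
     + E * (basic3 3 4 5 a b c + 2 * basic3 1 4 7 a b c + 1/2 * basic3 2 4 6 a b c))"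

lemma p5_tab:
  "phi5 A B C D E 1 1 1 = 0"
  "phi5 A B C D E 1 1 2 = 0"
  "phi5 A B C D E 1 1 3 = 0"
  "phi5 A B C D E 1 1 4 = 0"
  "phi5 A B C D E 1 1 5 = 0"
  "phi5 A B C D E 1 1 6 = 0"
  "phi5 A B C D E 1 1 7 = 0"
  "phi5 A B C D E 1 2 1 = 0"
  "phi5 A B C D E 1 2 2 = 0"
  "phi5 A B C D E 1 2 3 = 0"
  "phi5 A B C D E 1 2 4 = 0"
  "phi5 A B C D E 1 2 5 = 0"
  "phi5 A B C D E 1 2 6 = 0"
  "phi5 A B C D E 1 2 7 = 0"
  "phi5 A B C D E 1 3 1 = 0"
  "phi5 A B C D E 1 3 2 = 0"
  "phi5 A B C D E 1 3 3 = 0"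
  "phi5 A B C D E 1 3 4 = 0"
  "phi5 A B C D E 1 3 5 = 0"
  "phi5 A B C D E 1 3 6 = (A)"
  "phi5 A B C D E 1 3 7 = (-4 * B)"
  "phi5 A B C D E 1 4 1 = 0"
  "phi5 A B C D E 1 4 2 = 0"
  "phi5 A B C D E 1 4 3 = 0"
  "phi5 A B C D E 1 4 4 = 0"
  "phi5 A B C D E 1 4 5 = 0"
  "phi5 A B C D E 1 4 6 = 0"
  "phi5 A B C D E 1 4 7 = (2 * E)"
  "phi5 A B C D E 1 5 1 = 0"
  "phi5 A B C D E 1 5 2 = 0"
  "phi5 A B C D E 1 5 3 = 0"
  "phi5 A B C D E 1 5 4 = 0"
  "phi5 A B C D E 1 5 5 = 0"
  "phi5 A B C D E 1 5 6 = (2 * B)"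
  "phi5 A B C D E 1 5 7 = (-4 * C)"
  "phi5 A B C D E 1 6 1 = 0"
  "phi5 A B C D E 1 6 2 = 0"
  "phi5 A B C D E 1 6 3 = - (A)"
  "phi5 A B C D E 1 6 4 = 0"
  "phi5 A B C D E 1 6 5 = - (2 * B)"
  "phi5 A B C D E 1 6 6 = 0"
  "phi5 A B C D E 1 6 7 = 0"
  "phi5 A B C D E 1 7 1 = 0"
  "phi5 A B C D E 1 7 2 = 0"
  "phi5 A B C D E 1 7 3 = - (-4 * B)"
  "phi5 A B C D E 1 7 4 = - (2 * E)"
  "phi5 A B C D E 1 7 5 = - (-4 * C)"
  "phi5 A B C D E 1 7 6 = 0"
  "phi5 A B C D E 1 7 7 = 0"
  "phi5 A B C D E 2 1 1 = 0"
  "phi5 A B C D E 2 1 2 = 0"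
  "phi5 A B C D E 2 1 3 = 0"
  "phi5 A B C D E 2 1 4 = 0"
  "phi5 A B C D E 2 1 5 = 0"
  "phi5 A B C D E 2 1 6 = 0"
  "phi5 A B C D E 2 1 7 = 0"
  "phi5 A B C D E 2 2 1 = 0"
  "phi5 A B C D E 2 2 2 = 0"
  "phi5 A B C D E 2 2 3 = 0"
  "phi5 A B C D E 2 2 4 = 0"
  "phi5 A B C D E 2 2 5 = 0"
  "phi5 A B C D E 2 2 6 = 0"
  "phi5 A B C D E 2 2 7 = 0"
  "phi5 A B C D E 2 3 1 = 0"
  "phi5 A B C D E 2 3 2 = 0"
  "phi5 A B C D E 2 3 3 = 0"
  "phi5 A B C D E 2 3 4 = 0"
  "phi5 A B C D E 2 3 5 = 0"
  "phi5 A B C D E 2 3 6 = (B)"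
  "phi5 A B C D E 2 3 7 = (-2 * C)"
  "phi5 A B C D E 2 4 1 = 0"
  "phi5 A B C D E 2 4 2 = 0"
  "phi5 A B C D E 2 4 3 = 0"
  "phi5 A B C D E 2 4 4 = 0"
  "phi5 A B C D E 2 4 5 = 0"
  "phi5 A B C D E 2 4 6 = (E / 2)"
  "phi5 A B C D E 2 4 7 = 0"
  "phi5 A B C D E 2 5 1 = 0"
  "phi5 A B C D E 2 5 2 = 0"
  "phi5 A B C D E 2 5 3 = 0"
  "phi5 A B C D E 2 5 4 = 0"
  "phi5 A B C D E 2 5 5 = 0"
  "phi5 A B C D E 2 5 6 = (C)"
  "phi5 A B C D E 2 5 7 = (D)"
  "phi5 A B C D E 2 6 1 = 0"
  "phi5 A B C D E 2 6 2 = 0"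
  "phi5 A B C D E 2 6 3 = - (B)"
  "phi5 A B C D E 2 6 4 = - (E / 2)"
  "phi5 A B C D E 2 6 5 = - (C)"
  "phi5 A B C D E 2 6 6 = 0"
  "phi5 A B C D E 2 6 7 = 0"
  "phi5 A B C D E 2 7 1 = 0"
  "phi5 A B C D E 2 7 2 = 0"
  "phi5 A B C D E 2 7 3 = - (-2 * C)"
  "phi5 A B C D E 2 7 4 = 0"
  "phi5 A B C D E 2 7 5 = - (D)"
  "phi5 A B C D E 2 7 6 = 0"
  "phi5 A B C D E 2 7 7 = 0"
  "phi5 A B C D E 3 1 1 = 0"
  "phi5 A B C D E 3 1 2 = 0"
  "phi5 A B C D E 3 1 3 = 0"
  "phi5 A B C D E 3 1 4 = 0"
  "phi5 A B C D E 3 1 5 = 0"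
  "phi5 A B C D E 3 1 6 = - (A)"
  "phi5 A B C D E 3 1 7 = - (-4 * B)"
  "phi5 A B C D E 3 2 1 = 0"
  "phi5 A B C D E 3 2 2 = 0"
  "phi5 A B C D E 3 2 3 = 0"
  "phi5 A B C D E 3 2 4 = 0"
  "phi5 A B C D E 3 2 5 = 0"
  "phi5 A B C D E 3 2 6 = - (B)"
  "phi5 A B C D E 3 2 7 = - (-2 * C)"
  "phi5 A B C D E 3 3 1 = 0"
  "phi5 A B C D E 3 3 2 = 0"
  "phi5 A B C D E 3 3 3 = 0"
  "phi5 A B C D E 3 3 4 = 0"
  "phi5 A B C D E 3 3 5 = 0"
  "phi5 A B C D E 3 3 6 = 0"
  "phi5 A B C D E 3 3 7 = 0"
  "phi5 A B C D E 3 4 1 = 0"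
  "phi5 A B C D E 3 4 2 = 0"
  "phi5 A B C D E 3 4 3 = 0"
  "phi5 A B C D E 3 4 4 = 0"
  "phi5 A B C D E 3 4 5 = (E)"
  "phi5 A B C D E 3 4 6 = 0"
  "phi5 A B C D E 3 4 7 = 0"
  "phi5 A B C D E 3 5 1 = 0"
  "phi5 A B C D E 3 5 2 = 0"
  "phi5 A B C D E 3 5 3 = 0"
  "phi5 A B C D E 3 5 4 = - (E)"
  "phi5 A B C D E 3 5 5 = 0"
  "phi5 A B C D E 3 5 6 = 0"
  "phi5 A B C D E 3 5 7 = 0"
  "phi5 A B C D E 3 6 1 = (A)"
  "phi5 A B C D E 3 6 2 = (B)"
  "phi5 A B C D E 3 6 3 = 0"
  "phi5 A B C D E 3 6 4 = 0"
  "phi5 A B C D E 3 6 5 = 0"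
  "phi5 A B C D E 3 6 6 = 0"
  "phi5 A B C D E 3 6 7 = 0"
  "phi5 A B C D E 3 7 1 = (-4 * B)"
  "phi5 A B C D E 3 7 2 = (-2 * C)"
  "phi5 A B C D E 3 7 3 = 0"
  "phi5 A B C D E 3 7 4 = 0"
  "phi5 A B C D E 3 7 5 = 0"
  "phi5 A B C D E 3 7 6 = 0"
  "phi5 A B C D E 3 7 7 = 0"
  "phi5 A B C D E 4 1 1 = 0"
  "phi5 A B C D E 4 1 2 = 0"
  "phi5 A B C D E 4 1 3 = 0"
  "phi5 A B C D E 4 1 4 = 0"
  "phi5 A B C D E 4 1 5 = 0"
  "phi5 A B C D E 4 1 6 = 0"
  "phi5 A B C D E 4 1 7 = - (2 * E)"
  "phi5 A B C D E 4 2 1 = 0"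
  "phi5 A B C D E 4 2 2 = 0"
  "phi5 A B C D E 4 2 3 = 0"
  "phi5 A B C D E 4 2 4 = 0"
  "phi5 A B C D E 4 2 5 = 0"
  "phi5 A B C D E 4 2 6 = - (E / 2)"
  "phi5 A B C D E 4 2 7 = 0"
  "phi5 A B C D E 4 3 1 = 0"
  "phi5 A B C D E 4 3 2 = 0"
  "phi5 A B C D E 4 3 3 = 0"
  "phi5 A B C D E 4 3 4 = 0"
  "phi5 A B C D E 4 3 5 = - (E)"
  "phi5 A B C D E 4 3 6 = 0"
  "phi5 A B C D E 4 3 7 = 0"
  "phi5 A B C D E 4 4 1 = 0"
  "phi5 A B C D E 4 4 2 = 0"
  "phi5 A B C D E 4 4 3 = 0"
  "phi5 A B C D E 4 4 4 = 0"
  "phi5 A B C D E 4 4 5 = 0"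
  "phi5 A B C D E 4 4 6 = 0"
  "phi5 A B C D E 4 4 7 = 0"
  "phi5 A B C D E 4 5 1 = 0"
  "phi5 A B C D E 4 5 2 = 0"
  "phi5 A B C D E 4 5 3 = (E)"
  "phi5 A B C D E 4 5 4 = 0"
  "phi5 A B C D E 4 5 5 = 0"
  "phi5 A B C D E 4 5 6 = 0"
  "phi5 A B C D E 4 5 7 = 0"
  "phi5 A B C D E 4 6 1 = 0"
  "phi5 A B C D E 4 6 2 = (E / 2)"
  "phi5 A B C D E 4 6 3 = 0"
  "phi5 A B C D E 4 6 4 = 0"
  "phi5 A B C D E 4 6 5 = 0"
  "phi5 A B C D E 4 6 6 = 0"
  "phi5 A B C D E 4 6 7 = 0"
  "phi5 A B C D E 4 7 1 = (2 * E)"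
  "phi5 A B C D E 4 7 2 = 0"
  "phi5 A B C D E 4 7 3 = 0"
  "phi5 A B C D E 4 7 4 = 0"
  "phi5 A B C D E 4 7 5 = 0"
  "phi5 A B C D E 4 7 6 = 0"
  "phi5 A B C D E 4 7 7 = 0"
  "phi5 A B C D E 5 1 1 = 0"
  "phi5 A B C D E 5 1 2 = 0"
  "phi5 A B C D E 5 1 3 = 0"
  "phi5 A B C D E 5 1 4 = 0"
  "phi5 A B C D E 5 1 5 = 0"
  "phi5 A B C D E 5 1 6 = - (2 * B)"
  "phi5 A B C D E 5 1 7 = - (-4 * C)"
  "phi5 A B C D E 5 2 1 = 0"
  "phi5 A B C D E 5 2 2 = 0"
  "phi5 A B C D E 5 2 3 = 0"
  "phi5 A B C D E 5 2 4 = 0"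
  "phi5 A B C D E 5 2 5 = 0"
  "phi5 A B C D E 5 2 6 = - (C)"
  "phi5 A B C D E 5 2 7 = - (D)"
  "phi5 A B C D E 5 3 1 = 0"
  "phi5 A B C D E 5 3 2 = 0"
  "phi5 A B C D E 5 3 3 = 0"
  "phi5 A B C D E 5 3 4 = (E)"
  "phi5 A B C D E 5 3 5 = 0"
  "phi5 A B C D E 5 3 6 = 0"
  "phi5 A B C D E 5 3 7 = 0"
  "phi5 A B C D E 5 4 1 = 0"
  "phi5 A B C D E 5 4 2 = 0"
  "phi5 A B C D E 5 4 3 = - (E)"
  "phi5 A B C D E 5 4 4 = 0"
  "phi5 A B C D E 5 4 5 = 0"
  "phi5 A B C D E 5 4 6 = 0"
  "phi5 A B C D E 5 4 7 = 0"
  "phi5 A B C D E 5 5 1 = 0"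
  "phi5 A B C D E 5 5 2 = 0"
  "phi5 A B C D E 5 5 3 = 0"
  "phi5 A B C D E 5 5 4 = 0"
  "phi5 A B C D E 5 5 5 = 0"
  "phi5 A B C D E 5 5 6 = 0"
  "phi5 A B C D E 5 5 7 = 0"
  "phi5 A B C D E 5 6 1 = (2 * B)"
  "phi5 A B C D E 5 6 2 = (C)"
  "phi5 A B C D E 5 6 3 = 0"
  "phi5 A B C D E 5 6 4 = 0"
  "phi5 A B C D E 5 6 5 = 0"
  "phi5 A B C D E 5 6 6 = 0"
  "phi5 A B C D E 5 6 7 = 0"
  "phi5 A B C D E 5 7 1 = (-4 * C)"
  "phi5 A B C D E 5 7 2 = (D)"
  "phi5 A B C D E 5 7 3 = 0"
  "phi5 A B C D E 5 7 4 = 0"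
  "phi5 A B C D E 5 7 5 = 0"
  "phi5 A B C D E 5 7 6 = 0"
  "phi5 A B C D E 5 7 7 = 0"
  "phi5 A B C D E 6 1 1 = 0"
  "phi5 A B C D E 6 1 2 = 0"
  "phi5 A B C D E 6 1 3 = (A)"
  "phi5 A B C D E 6 1 4 = 0"
  "phi5 A B C D E 6 1 5 = (2 * B)"
  "phi5 A B C D E 6 1 6 = 0"
  "phi5 A B C D E 6 1 7 = 0"
  "phi5 A B C D E 6 2 1 = 0"
  "phi5 A B C D E 6 2 2 = 0"
  "phi5 A B C D E 6 2 3 = (B)"
  "phi5 A B C D E 6 2 4 = (E / 2)"
  "phi5 A B C D E 6 2 5 = (C)"
  "phi5 A B C D E 6 2 6 = 0"
  "phi5 A B C D E 6 2 7 = 0"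
  "phi5 A B C D E 6 3 1 = - (A)"
  "phi5 A B C D E 6 3 2 = - (B)"
  "phi5 A B C D E 6 3 3 = 0"
  "phi5 A B C D E 6 3 4 = 0"
  "phi5 A B C D E 6 3 5 = 0"
  "phi5 A B C D E 6 3 6 = 0"
  "phi5 A B C D E 6 3 7 = 0"
  "phi5 A B C D E 6 4 1 = 0"
  "phi5 A B C D E 6 4 2 = - (E / 2)"
  "phi5 A B C D E 6 4 3 = 0"
  "phi5 A B C D E 6 4 4 = 0"
  "phi5 A B C D E 6 4 5 = 0"
  "phi5 A B C D E 6 4 6 = 0"
  "phi5 A B C D E 6 4 7 = 0"
  "phi5 A B C D E 6 5 1 = - (2 * B)"
  "phi5 A B C D E 6 5 2 = - (C)"
  "phi5 A B C D E 6 5 3 = 0"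
  "phi5 A B C D E 6 5 4 = 0"
  "phi5 A B C D E 6 5 5 = 0"
  "phi5 A B C D E 6 5 6 = 0"
  "phi5 A B C D E 6 5 7 = 0"
  "phi5 A B C D E 6 6 1 = 0"
  "phi5 A B C D E 6 6 2 = 0"
  "phi5 A B C D E 6 6 3 = 0"
  "phi5 A B C D E 6 6 4 = 0"
  "phi5 A B C D E 6 6 5 = 0"
  "phi5 A B C D E 6 6 6 = 0"
  "phi5 A B C D E 6 6 7 = 0"
  "phi5 A B C D E 6 7 1 = 0"
  "phi5 A B C D E 6 7 2 = 0"
  "phi5 A B C D E 6 7 3 = 0"
  "phi5 A B C D E 6 7 4 = 0"
  "phi5 A B C D E 6 7 5 = 0"
  "phi5 A B C D E 6 7 6 = 0"
  "phi5 A B C D E 6 7 7 = 0"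
  "phi5 A B C D E 7 1 1 = 0"
  "phi5 A B C D E 7 1 2 = 0"
  "phi5 A B C D E 7 1 3 = (-4 * B)"
  "phi5 A B C D E 7 1 4 = (2 * E)"
  "phi5 A B C D E 7 1 5 = (-4 * C)"
  "phi5 A B C D E 7 1 6 = 0"
  "phi5 A B C D E 7 1 7 = 0"
  "phi5 A B C D E 7 2 1 = 0"
  "phi5 A B C D E 7 2 2 = 0"
  "phi5 A B C D E 7 2 3 = (-2 * C)"
  "phi5 A B C D E 7 2 4 = 0"
  "phi5 A B C D E 7 2 5 = (D)"
  "phi5 A B C D E 7 2 6 = 0"
  "phi5 A B C D E 7 2 7 = 0"
  "phi5 A B C D E 7 3 1 = - (-4 * B)"
  "phi5 A B C D E 7 3 2 = - (-2 * C)"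
  "phi5 A B C D E 7 3 3 = 0"
  "phi5 A B C D E 7 3 4 = 0"
  "phi5 A B C D E 7 3 5 = 0"
  "phi5 A B C D E 7 3 6 = 0"
  "phi5 A B C D E 7 3 7 = 0"
  "phi5 A B C D E 7 4 1 = - (2 * E)"
  "phi5 A B C D E 7 4 2 = 0"
  "phi5 A B C D E 7 4 3 = 0"
  "phi5 A B C D E 7 4 4 = 0"
  "phi5 A B C D E 7 4 5 = 0"
  "phi5 A B C D E 7 4 6 = 0"
  "phi5 A B C D E 7 4 7 = 0"
  "phi5 A B C D E 7 5 1 = - (-4 * C)"
  "phi5 A B C D E 7 5 2 = - (D)"
  "phi5 A B C D E 7 5 3 = 0"
  "phi5 A B C D E 7 5 4 = 0"
  "phi5 A B C D E 7 5 5 = 0"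
  "phi5 A B C D E 7 5 6 = 0"
  "phi5 A B C D E 7 5 7 = 0"
  "phi5 A B C D E 7 6 1 = 0"
  "phi5 A B C D E 7 6 2 = 0"
  "phi5 A B C D E 7 6 3 = 0"
  "phi5 A B C D E 7 6 4 = 0"
  "phi5 A B C D E 7 6 5 = 0"
  "phi5 A B C D E 7 6 6 = 0"
  "phi5 A B C D E 7 6 7 = 0"
  "phi5 A B C D E 7 7 1 = 0"
  "phi5 A B C D E 7 7 2 = 0"
  "phi5 A B C D E 7 7 3 = 0"
  "phi5 A B C D E 7 7 4 = 0"
  "phi5 A B C D E 7 7 5 = 0"
  "phi5 A B C D E 7 7 6 = 0"
  "phi5 A B C D E 7 7 7 = 0"
  "phi5 A B C D E (Suc 0) (Suc 0) (Suc 0) = 0"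
  "phi5 A B C D E (Suc 0) (Suc 0) 2 = 0"
  "phi5 A B C D E (Suc 0) (Suc 0) 3 = 0"
  "phi5 A B C D E (Suc 0) (Suc 0) 4 = 0"
  "phi5 A B C D E (Suc 0) (Suc 0) 5 = 0"
  "phi5 A B C D E (Suc 0) (Suc 0) 6 = 0"
  "phi5 A B C D E (Suc 0) (Suc 0) 7 = 0"
  "phi5 A B C D E (Suc 0) 2 (Suc 0) = 0"
  "phi5 A B C D E (Suc 0) 2 2 = 0"
  "phi5 A B C D E (Suc 0) 2 3 = 0"
  "phi5 A B C D E (Suc 0) 2 4 = 0"
  "phi5 A B C D E (Suc 0) 2 5 = 0"
  "phi5 A B C D E (Suc 0) 2 6 = 0"
  "phi5 A B C D E (Suc 0) 2 7 = 0"
  "phi5 A B C D E (Suc 0) 3 (Suc 0) = 0"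
  "phi5 A B C D E (Suc 0) 3 2 = 0"
  "phi5 A B C D E (Suc 0) 3 3 = 0"
  "phi5 A B C D E (Suc 0) 3 4 = 0"
  "phi5 A B C D E (Suc 0) 3 5 = 0"
  "phi5 A B C D E (Suc 0) 3 6 = (A)"
  "phi5 A B C D E (Suc 0) 3 7 = (-4 * B)"
  "phi5 A B C D E (Suc 0) 4 (Suc 0) = 0"
  "phi5 A B C D E (Suc 0) 4 2 = 0"
  "phi5 A B C D E (Suc 0) 4 3 = 0"
  "phi5 A B C D E (Suc 0) 4 4 = 0"
  "phi5 A B C D E (Suc 0) 4 5 = 0"
  "phi5 A B C D E (Suc 0) 4 6 = 0"
  "phi5 A B C D E (Suc 0) 4 7 = (2 * E)"
  "phi5 A B C D E (Suc 0) 5 (Suc 0) = 0"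
  "phi5 A B C D E (Suc 0) 5 2 = 0"
  "phi5 A B C D E (Suc 0) 5 3 = 0"
  "phi5 A B C D E (Suc 0) 5 4 = 0"
  "phi5 A B C D E (Suc 0) 5 5 = 0"
  "phi5 A B C D E (Suc 0) 5 6 = (2 * B)"
  "phi5 A B C D E (Suc 0) 5 7 = (-4 * C)"
  "phi5 A B C D E (Suc 0) 6 (Suc 0) = 0"
  "phi5 A B C D E (Suc 0) 6 2 = 0"
  "phi5 A B C D E (Suc 0) 6 3 = - (A)"
  "phi5 A B C D E (Suc 0) 6 4 = 0"
  "phi5 A B C D E (Suc 0) 6 5 = - (2 * B)"
  "phi5 A B C D E (Suc 0) 6 6 = 0"
  "phi5 A B C D E (Suc 0) 6 7 = 0"
  "phi5 A B C D E (Suc 0) 7 (Suc 0) = 0"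
  "phi5 A B C D E (Suc 0) 7 2 = 0"
  "phi5 A B C D E (Suc 0) 7 3 = - (-4 * B)"
  "phi5 A B C D E (Suc 0) 7 4 = - (2 * E)"
  "phi5 A B C D E (Suc 0) 7 5 = - (-4 * C)"
  "phi5 A B C D E (Suc 0) 7 6 = 0"
  "phi5 A B C D E (Suc 0) 7 7 = 0"
  "phi5 A B C D E 2 (Suc 0) (Suc 0) = 0"
  "phi5 A B C D E 2 (Suc 0) 2 = 0"
  "phi5 A B C D E 2 (Suc 0) 3 = 0"
  "phi5 A B C D E 2 (Suc 0) 4 = 0"
  "phi5 A B C D E 2 (Suc 0) 5 = 0"
  "phi5 A B C D E 2 (Suc 0) 6 = 0"
  "phi5 A B C D E 2 (Suc 0) 7 = 0"
  "phi5 A B C D E 2 2 (Suc 0) = 0"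
  "phi5 A B C D E 2 3 (Suc 0) = 0"
  "phi5 A B C D E 2 4 (Suc 0) = 0"
  "phi5 A B C D E 2 5 (Suc 0) = 0"
  "phi5 A B C D E 2 6 (Suc 0) = 0"
  "phi5 A B C D E 2 7 (Suc 0) = 0"
  "phi5 A B C D E 3 (Suc 0) (Suc 0) = 0"
  "phi5 A B C D E 3 (Suc 0) 2 = 0"
  "phi5 A B C D E 3 (Suc 0) 3 = 0"
  "phi5 A B C D E 3 (Suc 0) 4 = 0"
  "phi5 A B C D E 3 (Suc 0) 5 = 0"
  "phi5 A B C D E 3 (Suc 0) 6 = - (A)"
  "phi5 A B C D E 3 (Suc 0) 7 = - (-4 * B)"
  "phi5 A B C D E 3 2 (Suc 0) = 0"
  "phi5 A B C D E 3 3 (Suc 0) = 0"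
  "phi5 A B C D E 3 4 (Suc 0) = 0"
  "phi5 A B C D E 3 5 (Suc 0) = 0"
  "phi5 A B C D E 3 6 (Suc 0) = (A)"
  "phi5 A B C D E 3 7 (Suc 0) = (-4 * B)"
  "phi5 A B C D E 4 (Suc 0) (Suc 0) = 0"
  "phi5 A B C D E 4 (Suc 0) 2 = 0"
  "phi5 A B C D E 4 (Suc 0) 3 = 0"
  "phi5 A B C D E 4 (Suc 0) 4 = 0"
  "phi5 A B C D E 4 (Suc 0) 5 = 0"
  "phi5 A B C D E 4 (Suc 0) 6 = 0"
  "phi5 A B C D E 4 (Suc 0) 7 = - (2 * E)"
  "phi5 A B C D E 4 2 (Suc 0) = 0"
  "phi5 A B C D E 4 3 (Suc 0) = 0"
  "phi5 A B C D E 4 4 (Suc 0) = 0"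
  "phi5 A B C D E 4 5 (Suc 0) = 0"
  "phi5 A B C D E 4 6 (Suc 0) = 0"
  "phi5 A B C D E 4 7 (Suc 0) = (2 * E)"
  "phi5 A B C D E 5 (Suc 0) (Suc 0) = 0"
  "phi5 A B C D E 5 (Suc 0) 2 = 0"
  "phi5 A B C D E 5 (Suc 0) 3 = 0"
  "phi5 A B C D E 5 (Suc 0) 4 = 0"
  "phi5 A B C D E 5 (Suc 0) 5 = 0"
  "phi5 A B C D E 5 (Suc 0) 6 = - (2 * B)"
  "phi5 A B C D E 5 (Suc 0) 7 = - (-4 * C)"
  "phi5 A B C D E 5 2 (Suc 0) = 0"
  "phi5 A B C D E 5 3 (Suc 0) = 0"
  "phi5 A B C D E 5 4 (Suc 0) = 0"
  "phi5 A B C D E 5 5 (Suc 0) = 0"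
  "phi5 A B C D E 5 6 (Suc 0) = (2 * B)"
  "phi5 A B C D E 5 7 (Suc 0) = (-4 * C)"
  "phi5 A B C D E 6 (Suc 0) (Suc 0) = 0"
  "phi5 A B C D E 6 (Suc 0) 2 = 0"
  "phi5 A B C D E 6 (Suc 0) 3 = (A)"
  "phi5 A B C D E 6 (Suc 0) 4 = 0"
  "phi5 A B C D E 6 (Suc 0) 5 = (2 * B)"
  "phi5 A B C D E 6 (Suc 0) 6 = 0"
  "phi5 A B C D E 6 (Suc 0) 7 = 0"
  "phi5 A B C D E 6 2 (Suc 0) = 0"
  "phi5 A B C D E 6 3 (Suc 0) = - (A)"
  "phi5 A B C D E 6 4 (Suc 0) = 0"
  "phi5 A B C D E 6 5 (Suc 0) = - (2 * B)"
  "phi5 A B C D E 6 6 (Suc 0) = 0"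
  "phi5 A B C D E 6 7 (Suc 0) = 0"
  "phi5 A B C D E 7 (Suc 0) (Suc 0) = 0"
  "phi5 A B C D E 7 (Suc 0) 2 = 0"
  "phi5 A B C D E 7 (Suc 0) 3 = (-4 * B)"
  "phi5 A B C D E 7 (Suc 0) 4 = (2 * E)"
  "phi5 A B C D E 7 (Suc 0) 5 = (-4 * C)"
  "phi5 A B C D E 7 (Suc 0) 6 = 0"
  "phi5 A B C D E 7 (Suc 0) 7 = 0"
  "phi5 A B C D E 7 2 (Suc 0) = 0"
  "phi5 A B C D E 7 3 (Suc 0) = - (-4 * B)"
  "phi5 A B C D E 7 4 (Suc 0) = - (2 * E)"
  "phi5 A B C D E 7 5 (Suc 0) = - (-4 * C)"
  "phi5 A B C D E 7 6 (Suc 0) = 0"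
  "phi5 A B C D E 7 7 (Suc 0) = 0"
  by (simp_all add: phi5_def basic3_def)

lemma p5_out1 [simp]: "7 < a \<Longrightarrow> phi5 A B C D E a b c = 0"
  by (simp add: phi5_def basic3_def)
lemma p5_out2 [simp]: "7 < b \<Longrightarrow> phi5 A B C D E a b c = 0"
  by (simp add: phi5_def basic3_def)
lemma p5_out3 [simp]: "7 < c \<Longrightarrow> phi5 A B C D E a b c = 0"
  by (simp add: phi5_def basic3_def)
lemma p5_out0 [simp]: "phi5 A B C D E 0 b c = 0" "phi5 A B C D E a 0 c = 0" "phi5 A B C D E a b 0 = 0"
  by (simp_all add: phi5_def basic3_def)

lemma W44: "wedge223_top (phi5 A B C D E 4) (phi5 A B C D E 4) (phi5 A B C D E) = 6 * E^3"
  unfolding wedge_altf by (simp add: altf_Cons altf_Nil p5_tab; simp add: algebra_simps power3_eq_cube)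
lemma W35: "wedge223_top (phi5 A B C D E 3) (phi5 A B C D E 5) (phi5 A B C D E) = -3*A*D*E - 12*B*C*E"
  unfolding wedge_altf by (simp add: altf_Cons altf_Nil p5_tab; simp add: algebra_simps)
lemma W16: "wedge223_top (phi5 A B C D E 1) (phi5 A B C D E 6) (phi5 A B C D E) = -12*A*C*E + 24*B^2*E"
  unfolding wedge_altf by (simp add: altf_Cons altf_Nil p5_tab; simp add: algebra_simps power2_eq_square)
lemma W27: "wedge223_top (phi5 A B C D E 2) (phi5 A B C D E 7) (phi5 A B C D E) = -12*B*D*E - 24*C^2*E"
  unfolding wedge_altf by (simp add: altf_Cons altf_Nil p5_tab; simp add: algebra_simps power2_eq_square)

lemma cube1: "(E::real)^3 = 1 \<Longrightarrow> E = 1"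
proof -
  assume h: "E^3 = 1"
  have "(E - 1) * (E^2 + E + 1) = 0" using h by (simp add: algebra_simps power2_eq_square power3_eq_cube)
  moreover have "E^2 + E + 1 > 0" proof -
    have "E^2 + E + 1 = (E + 1/2)^2 + 3/4" by (simp add: power2_eq_square algebra_simps)
    moreover have "0 \<le> (E + 1/2)^2" by simp
    ultimately show ?thesis by linarith
  qed
  ultimately show ?thesis by simp
qed

lemma solve: fixes A B C D :: real
  assumes "A*D + 4*B*C = 1" "A*C = 2*B^2" "B*D = -2*C^2"
  shows "B = 0 \<and> C = 0 \<and> A \<noteq> 0 \<and> D = 1/A"
proof -
  have C0: "C = 0"
  proof (rule ccontr)
    assume C: "C \<noteq> 0"
    then have B: "B \<noteq> 0" using assms(3) by auto
    have "(A*C)*(B*D) = (2*B^2)*(-2*C^2)" using assms(2,3) by simp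
    then have "(B*C) * (A*D + 4*B*C) = 0" by (simp add: algebra_simps power2_eq_square)
    then show False using assms(1) B C by simp
  qed
  then have B0: "B = 0" using assms(2) by simp
  then have AD: "A*D = 1" using assms(1) by simp
  then have A0: "A \<noteq> 0" by auto
  then have "D = 1/A" using AD by (simp add: field_simps)
  then show ?thesis using B0 C0 A0 by simp
qed

lemma inv_inst: assumes "inv_cond \<phi>" "x \<in> {8,9,10}" "i \<in> {1..10}" "j \<in> {1..10}" "k \<in> {1..10}"
  shows "sv x i (\<lambda>a. \<phi> a j k) + sv x j (\<lambda>a. \<phi> i a k) + sv x k (\<lambda>a. \<phi> i j a) = 0"
  using assms unfolding inv_cond_def by blast

lemma forward_vals:
  assumes c: "is_coeff3 \<phi>" and inv: "inv_cond \<phi>"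
  shows "\<phi> = phi5 (\<phi> 1 3 6) (\<phi> 2 3 6) (\<phi> 2 5 6) (\<phi> 2 5 7) (\<phi> 3 4 5)"
proof -
  have as1: "\<phi> a b c = - \<phi> b a c" and as2: "\<phi> a b c = - \<phi> a c b" for a b c
    using c unfolding is_coeff3_def by blast+
  have s1: "b < a \<Longrightarrow> \<phi> a b c = - \<phi> b a c" for a b c using as1 .
  have s2: "c < b \<Longrightarrow> \<phi> a b c = - \<phi> a c b" for a b c using as2 .
  have z1: "\<phi> a a c = 0" for a c using as1[of a a c] by simp
  have z2: "\<phi> a b b = 0" for a b using as2[of a b b] by simp
  have o1: "7 < a \<Longrightarrow> \<phi> a b c = 0" for a b c using coeff_zero[OF c] by auto
  have o2: "7 < b \<Longrightarrow> \<phi> a b c = 0" for a b c using coeff_zero[OF c] by auto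
  have o3: "7 < c \<Longrightarrow> \<phi> a b c = 0" for a b c using coeff_zero[OF c] by auto
  have o0: "\<phi> 0 b c = 0" "\<phi> a 0 c = 0" "\<phi> a b 0 = 0" for a b c using coeff_zero[OF c] by auto
  note nrm [simp] = s1 s2 z1 z2 o1 o2 o3 o0
  have I: "\<And>x i j k. x \<in> {8,9,10} \<Longrightarrow> i \<in> {1..10} \<Longrightarrow> j \<in> {1..10} \<Longrightarrow> k \<in> {1..10} \<Longrightarrow>
     sv x i (\<lambda>a. \<phi> a j k) + sv x j (\<lambda>a. \<phi> i a k) + sv x k (\<lambda>a. \<phi> i j a) = 0"
    using inv_inst[OF inv] by blast
  note raw = I[of 8 1 2 6] I[of 8 1 2 7] I[of 8 1 3 5] I[of 8 1 3 7] I[of 8 1 4 5] I[of 8 1 4 6] I[of 8 1 4 7] I[of 8 1 5 6] I[of 8 1 5 7] I[of 8 1 6 7] I[of 8 2 3 4] I[of 8 2 3 5] I[of 8 2 3 6] I[of 8 2 3 7] I[of 8 2 4 6] I[of 8 2 4 7] I[of 8 2 5 6] I[of 8 2 6 7] I[of 8 3 4 5] I[of 8 3 4 6] I[of 8 3 4 7] I[of 8 3 5 6] I[of 8 3 5 7] I[of 8 3 6 7] I[of 8 4 5 6] I[of 8 4 5 7] I[of 8 4 6 7] I[of 8 5 6 7] I[of 9 1 2 3] I[of 9 1 2 4] I[of 9 1 2 5] I[of 9 1 2 6] I[of 9 1 2 7] I[of 9 1 3 4] I[of 9 1 3 5] I[of 9 1 4 5] I[of 9 1 6 7] I[of 9 2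 3 4] I[of 9 2 3 5] I[of 9 2 4 5] I[of 9 2 6 7] I[of 9 3 4 6] I[of 9 3 4 7] I[of 9 3 5 6] I[of 9 3 5 7] I[of 9 3 6 7] I[of 9 4 5 6] I[of 9 4 5 7] I[of 9 4 6 7] I[of 9 5 6 7] I[of 10 1 2 3] I[of 10 1 2 4] I[of 10 1 2 5] I[of 10 1 2 6] I[of 10 1 2 7] I[of 10 1 3 4] I[of 10 1 3 5] I[of 10 1 3 7] I[of 10 1 4 5] I[of 10 1 4 6] I[of 10 1 4 7] I[of 10 1 5 6] I[of 10 1 5 7] I[of 10 1 6 7] I[of 10 2 3 4] I[of 10 2 3 5] I[of 10 2 3 6] I[of 10 2 3 7] I[of 10 2 4 5] I[of 10 2 4 6] I[of 10 2 4 7] I[of 10 2 5 6] I[of 10 2 6 7] I[of 10 3 4 5] I[of 10 3 4 7] I[of 10 3 5 6] I[of 10 3 5 7] I[of 10 4 5 6]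
  note raw' = raw[simplified, unfolded One_nat_def[symmetric]]
  have vals: "\<phi> 1 2 3 = 0"
      "\<phi> 1 2 4 = 0"
      "\<phi> 1 2 5 = 0"
      "\<phi> 1 2 6 = 0"
      "\<phi> 1 2 7 = 0"
      "\<phi> 1 3 4 = 0"
      "\<phi> 1 3 5 = 0"
      "\<phi> 1 3 7 = (-4) * \<phi> 2 3 6"
      "\<phi> 1 4 5 = 0"
      "\<phi> 1 4 6 = 0"
      "\<phi> 1 4 7 = (2) * \<phi> 3 4 5"
      "\<phi> 1 5 6 = (2) * \<phi> 2 3 6"
      "\<phi> 1 5 7 = (-4) * \<phi> 2 5 6"
      "\<phi> 1 6 7 = 0"
      "\<phi> 2 3 4 = 0"
      "\<phi> 2 3 5 = 0"
      "\<phi> 2 3 7 = (-2) * \<phi> 2 5 6"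
      "\<phi> 2 4 5 = 0"
      "\<phi> 2 4 6 = (1/2) * \<phi> 3 4 5"
      "\<phi> 2 4 7 = 0"
      "\<phi> 2 6 7 = 0"
      "\<phi> 3 4 6 = 0"
      "\<phi> 3 4 7 = 0"
      "\<phi> 3 5 6 = 0"
      "\<phi> 3 5 7 = 0"
      "\<phi> 3 6 7 = 0"
      "\<phi> 4 5 6 = 0"
      "\<phi> 4 5 7 = 0"
      "\<phi> 4 6 7 = 0"
      "\<phi> 5 6 7 = 0"
    using raw' by linarith+
  show ?thesis
  proof (intro ext)
    fix a b c :: nat
    show "\<phi> a b c = phi5 (\<phi> 1 3 6) (\<phi> 2 3 6) (\<phi> 2 5 6) (\<phi> 2 5 7) (\<phi> 3 4 5) a b c"
    proof (cases "a \<in> {1..7} \<and> b \<in> {1..7} \<and> c \<in> {1..7}")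
      case True
      then have "a \<in> {1,2,3,4,5,6,7} \<and> b \<in> {1,2,3,4,5,6,7} \<and> c \<in> {1,2,3,4,5,6,7}" unfolding set7 .
      then have "(a = 1 \<or> a = 2 \<or> a = 3 \<or> a = 4 \<or> a = 5 \<or> a = 6 \<or> a = 7) \<and>
        (b = 1 \<or> b = 2 \<or> b = 3 \<or> b = 4 \<or> b = 5 \<or> b = 6 \<or> b = 7) \<and>
        (c = 1 \<or> c = 2 \<or> c = 3 \<or> c = 4 \<or> c = 5 \<or> c = 6 \<or> c = 7)" by simp
      then show ?thesis
        by (elim conjE disjE; simp only: ; simp add: vals vals[unfolded One_nat_def] p5_tab)
    next
      case False
      then have "a = 0 \<or> 7 < a \<or> b = 0 \<or> 7 < b \<or> c = 0 \<or> 7 < c" by auto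
      then show ?thesis by auto
    qed
  qed
qed


theorem corollary4p4:
  fixes \<phi> :: "nat \<Rightarrow> nat \<Rightarrow> nat \<Rightarrow> real"
  assumes "is_coeff3 \<phi>"
  shows "(Ds_invariant \<phi> \<and> compatible gK \<phi>) \<longleftrightarrow> (\<exists>q. q \<noteq> 0 \<and> \<phi> = phi_family q)"
proof
  assume h: "Ds_invariant \<phi> \<and> compatible gK \<phi>"
  then have inv: "inv_cond \<phi>" using Ds_inv_iff[OF assms] by simp
  from h have comp: "compatible gK \<phi>" by simp
  define A where "A = \<phi> 1 3 6"
  define B where "B = \<phi> 2 3 6"
  define C where "C = \<phi> 2 5 6"
  define D where "D = \<phi> 2 5 7"
  define E where "E = \<phi> 3 4 5"
  have peq: "\<phi> = phi5 A B C D E" unfolding A_def B_def C_def D_def E_def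
    by (rule forward_vals[OF assms inv])
  have w: "wedge223_top (\<phi> m) (\<phi> n) \<phi> = 3 * gK m n" if "m \<in> {1..7}" "n \<in> {1..7}" for m n
    using comp that unfolding compatible_def by blast
  have e44: "6 * E^3 = 6" using w[of 4 4] unfolding peq W44 by (simp add: gK_def odot_def)
  have e35: "-3*A*D*E - 12*B*C*E = -3" using w[of 3 5] unfolding peq W35 by (simp add: gK_def odot_def)
  have e16: "-12*A*C*E + 24*B^2*E = 0" using w[of 1 6] unfolding peq W16 by (simp add: gK_def odot_def)
  have e27: "-12*B*D*E - 24*C^2*E = 0" using w[of 2 7] unfolding peq W27 by (simp add: gK_def odot_def)
  have E1: "E = 1" using e44 cube1 by simp
  have "A*D + 4*B*C = 1" "A*C = 2*B^2" "B*D = -2*C^2" using e35 e16 e27 unfolding E1 by auto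
  then have s: "B = 0 \<and> C = 0 \<and> A \<noteq> 0 \<and> D = 1/A" by (rule solve)
  have "\<phi> = phi_family A" unfolding peq using s E1
    by (simp add: fun_eq_iff phi5_def phi_family_def algebra_simps)
  then show "\<exists>q. q \<noteq> 0 \<and> \<phi> = phi_family q" using s by blast
next
  assume "\<exists>q. q \<noteq> 0 \<and> \<phi> = phi_family q"
  then obtain q where q: "q \<noteq> 0" "\<phi> = phi_family q" by blast
  show "Ds_invariant \<phi> \<and> compatible gK \<phi>"
    using Ds_inv_iff[OF assms] inv_pf compat_pf[OF q(1)] q(2) by simp
qed

end
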